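(* Let $\mathcal{G}$ be a hereditary class of finite graphs. Then the following statements are equivalent. (1) $\mathcal{G}$ is clique-sparse, i.e. there is a constant $k$ such that $\widetilde{\omega}(G)\le k$ and $\mathsf{cideg}(G)\le k$ for all $G\in\mathcal{G}$. (2) There is a constant $d$ such that for every graph $G\in\mathcal{G}$, the graph obtained from $G$ by successively identifying true twins has maximum degree at most $d$. (3) Both $\widetilde{\omega}$ and $\alpha^{\ast}$ are bounded on $\mathcal{G}$. (4) Both $\widetilde{\omega}$ and $\theta^{\ast}$ are bounded on $\mathcal{G}$. (5) $\mathsf{cdeg}$ is bounded on $\mathcal{G}$. (6) There is an $n$ such that no graph in $\mathcal{G}$ contains any of $\mathscr{S}_n$, $\mathscr{M}^{KI}_n$, $\mathscr{M}^{KK}_n$, $\mathscr{A}^{KK}_n$, $\mathscr{H}^{KK}_n$ as an induced subgraph (i.e. $\mathcal{G}$ excludes a star, a split matching, a matching between two cliques, an anti-matching between two cliques, and a half-graph between two cliques as induced subgraphs).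
   Context: All graphs are finite and simple; a class is hereditary if it is closed under taking induced subgraphs. Two vertices are true twins if they have the same closed neighbourhood; identifying true twins means replacing them by a single vertex with that neighbourhood. Two vertices are equivalent if they lie in exactly the same maximal cliques. $\widetilde{\omega}(G)$ is the maximum over maximal cliques $K$ of the number of equivalence classes meeting $K$; $\mathsf{cideg}(G)$ is the maximum over vertices $v$ of the number of maximal cliques containing $v$; $\mathsf{cdeg}(G)$ is the maximum over maximal cliques $K$ of the number of other maximal cliques intersecting $K$. $\alpha^{\ast}(G)=\max_v \alpha(G[N[v]])$ and $\theta^{\ast}(G)=\max_v\theta(G[N[v]])$, where $\theta$ is the clique-cover number. A parameter is bounded on $\mathcal{G}$ if some constant bounds it on all members. For ordered sets $X=\{x_1,\dots,x_n\}$, $Y=\{y_1,\dots,y_n\}$ and a vertex $c$: $\mathscr{S}_n$ is the star with centre $c$ and leaves $X$; $\mathscr{M}^{KI}_n$ has edges $x_iy_i$ ($i\in[n]$) and $X$ a clique ($Y$ independent); $\mathscr{M}^{KK}_n$ has edges $x_iy_i$ and both $X$ and $Y$ cliques; $\mathscr{A}^{KK}_n$ has edges $x_iy_j$ for $i\neq j$ and both $X,Y$ cliques; $\mathscr{H}^{KK}_n$ has edges $x_iy_j$ for $i\le j$ and both $X,Y$ cliques. *)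

theory Defs
  imports Main
begin

type_synonym 'a graph = "'a set \<times> 'a set set"

definition verts :: "'a graph \<Rightarrow> 'a set" where "verts G = fst G"
definition edges :: "'a graph \<Rightarrow> 'a set set" where "edges G = snd G"

definition wf_graph :: "'a graph \<Rightarrow> bool" where
  "wf_graph G \<longleftrightarrow> finite (verts G) \<and> (\<forall>e\<in>edges G. e \<subseteq> verts G \<and> card e = 2)"

definition adj :: "'a graph \<Rightarrow> 'a \<Rightarrow> 'a \<Rightarrow> bool" where
  "adj G u v \<longleftrightarrow> {u, v} \<in> edges G"

definition induced_subgraph :: "'a graph \<Rightarrow> 'a set \<Rightarrow> 'a graph" where
  "induced_subgraph G S = (S, {e \<in> edges G. e \<subseteq> S})"

definition hereditary :: "'a graph set \<Rightarrow> bool" where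
  "hereditary \<G> \<longleftrightarrow> (\<forall>G\<in>\<G>. \<forall>S. S \<subseteq> verts G \<longrightarrow> induced_subgraph G S \<in> \<G>)"

definition closed_nbhd :: "'a graph \<Rightarrow> 'a \<Rightarrow> 'a set" where
  "closed_nbhd G v = insert v {u \<in> verts G. adj G v u}"

definition clique :: "'a graph \<Rightarrow> 'a set \<Rightarrow> bool" where
  "clique G K \<longleftrightarrow> K \<subseteq> verts G \<and> (\<forall>u\<in>K. \<forall>v\<in>K. u \<noteq> v \<longrightarrow> adj G u v)"

definition maximal_clique :: "'a graph \<Rightarrow> 'a set \<Rightarrow> bool" where
  "maximal_clique G K \<longleftrightarrow> clique G K \<and> (\<forall>K'. clique G K' \<and> K \<subseteq> K' \<longrightarrow> K' = K)"

definition independent :: "'a graph \<Rightarrow> 'a set \<Rightarrow> bool" where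
  "independent G I \<longleftrightarrow> I \<subseteq> verts G \<and> (\<forall>u\<in>I. \<forall>v\<in>I. \<not> adj G u v)"

definition max_cliques_at :: "'a graph \<Rightarrow> 'a \<Rightarrow> 'a set set" where
  "max_cliques_at G v = {K. maximal_clique G K \<and> v \<in> K}"

definition clique_equiv_class :: "'a graph \<Rightarrow> 'a \<Rightarrow> 'a set" where
  "clique_equiv_class G v = {u \<in> verts G. max_cliques_at G u = max_cliques_at G v}"

definition omega_tilde :: "'a graph \<Rightarrow> nat" where
  "omega_tilde G = Max (insert 0
     {card (clique_equiv_class G ` K) | K. maximal_clique G K})"

definition cideg :: "'a graph \<Rightarrow> nat" where
  "cideg G = Max (insert 0 {card (max_cliques_at G v) | v. v \<in> verts G})"

definition cdeg :: "'a graph \<Rightarrow> nat" where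
  "cdeg G = Max (insert 0
     {card {K'. maximal_clique G K' \<and> K' \<noteq> K \<and> K' \<inter> K \<noteq> {}} | K. maximal_clique G K})"

definition independence_number :: "'a graph \<Rightarrow> nat" where
  "independence_number G = Max (insert 0 {card I | I. independent G I})"

definition clique_cover_number :: "'a graph \<Rightarrow> nat" where
  "clique_cover_number G = (LEAST k. \<exists>\<K>. finite \<K> \<and> card \<K> = k \<and>
      (\<forall>K\<in>\<K>. clique G K) \<and> \<Union>\<K> = verts G)"

definition alpha_star :: "'a graph \<Rightarrow> nat" where
  "alpha_star G = Max (insert 0
     {independence_number (induced_subgraph G (closed_nbhd G v)) | v. v \<in> verts G})"

definition theta_star :: "'a graph \<Rightarrow> nat" where
  "theta_star G = Max (insert 0
     {clique_cover_number (induced_subgraph G (closed_nbhd G v)) | v. v \<in> verts G})"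

definition max_degree :: "'a graph \<Rightarrow> nat" where
  "max_degree G = Max (insert 0 {card {u \<in> verts G. adj G v u} | v. v \<in> verts G})"

text \<open>The graph obtained by (successively) identifying true twins: the quotient by the
  relation of having equal closed neighbourhoods.\<close>
definition twin_class :: "'a graph \<Rightarrow> 'a \<Rightarrow> 'a set" where
  "twin_class G v = {u \<in> verts G. closed_nbhd G u = closed_nbhd G v}"

definition twin_reduction :: "'a graph \<Rightarrow> 'a set graph" where
  "twin_reduction G =
     (twin_class G ` verts G,
      {{A, B} | A B. A \<in> twin_class G ` verts G \<and> B \<in> twin_class G ` verts G \<and> A \<noteq> B \<and>
                     (\<exists>a\<in>A. \<exists>b\<in>B. adj G a b)})"

definition bounded_on :: "'a graph set \<Rightarrow> ('a graph \<Rightarrow> nat) \<Rightarrow> bool" where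
  "bounded_on \<G> f \<longleftrightarrow> (\<exists>k. \<forall>G\<in>\<G>. f G \<le> k)"

definition contains_induced :: "'a graph \<Rightarrow> 'b graph \<Rightarrow> bool" where
  "contains_induced G H \<longleftrightarrow> (\<exists>f. inj_on f (verts H) \<and> f ` verts H \<subseteq> verts G \<and>
      (\<forall>u\<in>verts H. \<forall>v\<in>verts H. adj G (f u) (f v) \<longleftrightarrow> adj H u v))"

datatype pvert = Cv | Xv nat | Yv nat

definition XY :: "nat \<Rightarrow> pvert set" where
  "XY n = Xv ` {1..n} \<union> Yv ` {1..n}"

definition star_graph :: "nat \<Rightarrow> pvert graph" where
  "star_graph n = (insert Cv (Xv ` {1..n}), {{Cv, Xv i} | i. i \<in> {1..n}})"

definition matching_KI :: "nat \<Rightarrow> pvert graph" where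
  "matching_KI n = (XY n,
     {{Xv i, Yv i} | i. i \<in> {1..n}} \<union> {{Xv i, Xv j} | i j. i \<in> {1..n} \<and> j \<in> {1..n} \<and> i \<noteq> j})"

definition matching_KK :: "nat \<Rightarrow> pvert graph" where
  "matching_KK n = (XY n,
     {{Xv i, Yv i} | i. i \<in> {1..n}} \<union> {{Xv i, Xv j} | i j. i \<in> {1..n} \<and> j \<in> {1..n} \<and> i \<noteq> j}
     \<union> {{Yv i, Yv j} | i j. i \<in> {1..n} \<and> j \<in> {1..n} \<and> i \<noteq> j})"

definition antimatching_KK :: "nat \<Rightarrow> pvert graph" where
  "antimatching_KK n = (XY n,
     {{Xv i, Yv j} | i j. i \<in> {1..n} \<and> j \<in> {1..n} \<and> i \<noteq> j}
     \<union> {{Xv i, Xv j} | i j. i \<in> {1..n} \<and> j \<in> {1..n} \<and> i \<noteq> j}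
     \<union> {{Yv i, Yv j} | i j. i \<in> {1..n} \<and> j \<in> {1..n} \<and> i \<noteq> j})"

definition halfgraph_KK :: "nat \<Rightarrow> pvert graph" where
  "halfgraph_KK n = (XY n,
     {{Xv i, Yv j} | i j. i \<in> {1..n} \<and> j \<in> {1..n} \<and> i \<le> j}
     \<union> {{Xv i, Xv j} | i j. i \<in> {1..n} \<and> j \<in> {1..n} \<and> i \<noteq> j}
     \<union> {{Yv i, Yv j} | i j. i \<in> {1..n} \<and> j \<in> {1..n} \<and> i \<noteq> j})"

end

theory Submission
  imports Defs "HOL-Library.Ramsey"
begin
hide_const (open) Ramsey.clique Ramsey.indep

lemma verts_pair[simp]: "verts (V, E) = V" by (simp add: verts_def)
lemma edges_pair[simp]: "edges (V, E) = E" by (simp add: edges_def)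

lemma adj_sym: "adj G a b = adj G b a"
  by (simp add: adj_def insert_commute)

lemma adj_irrefl: "wf_graph G \<Longrightarrow> \<not> adj G a a"
  unfolding wf_graph_def adj_def by fastforce

lemma adj_verts: "wf_graph G \<Longrightarrow> adj G a b \<Longrightarrow> a \<in> verts G \<and> b \<in> verts G"
  unfolding wf_graph_def adj_def by blast

lemma adj_induced: "adj (induced_subgraph G S) a b \<longleftrightarrow> adj G a b \<and> a \<in> S \<and> b \<in> S"
  by (auto simp: adj_def induced_subgraph_def edges_def)

lemma verts_induced[simp]: "verts (induced_subgraph G S) = S"
  by (simp add: induced_subgraph_def verts_def)

lemma wf_induced: "wf_graph G \<Longrightarrow> S \<subseteq> verts G \<Longrightarrow> wf_graph (induced_subgraph G S)"
  unfolding wf_graph_def induced_subgraph_def verts_def edges_def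
  by (auto intro: finite_subset)

lemma closed_nbhd_sub: "v \<in> verts G \<Longrightarrow> closed_nbhd G v \<subseteq> verts G"
  by (auto simp: closed_nbhd_def)

lemma in_closed_nbhd: "wf_graph G \<Longrightarrow> u \<in> closed_nbhd G v \<longleftrightarrow> u = v \<or> adj G v u"
  using adj_verts by (fastforce simp: closed_nbhd_def)

lemma finite_verts: "wf_graph G \<Longrightarrow> finite (verts G)"
  by (simp add: wf_graph_def)

lemma clique_extend:
  assumes wf: "wf_graph G" and C: "clique G C"
  shows "\<exists>K. maximal_clique G K \<and> C \<subseteq> K"
proof -
  let ?A = "{K. clique G K \<and> C \<subseteq> K}"
  have fin: "finite ?A"
    by (rule finite_subset[of _ "Pow (verts G)"]) (use wf in \<open>auto simp: Defs.clique_def wf_graph_def\<close>)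
  have ne: "?A \<noteq> {}" using C by blast
  obtain m where m: "m \<in> ?A" and mx: "\<forall>b\<in>?A. m \<le> b \<longrightarrow> m = b"
    using finite_has_maximal[OF fin ne] by blast
  have "maximal_clique G m"
    unfolding maximal_clique_def using m mx by auto
  then show ?thesis using m by blast
qed

lemma Max_bound_le:
  assumes "\<And>x. P x \<Longrightarrow> f x \<le> (k::nat)"
  shows "Max (insert 0 {f x | x. P x}) \<le> k"
proof -
  have "finite {f x | x. P x}"
    by (rule finite_subset[of _ "{..k}"]) (use assms in auto)
  then show ?thesis using assms by (subst Max_le_iff) auto
qed

lemma Max_bound_ge:
  assumes "finite {x. P x}" "P x"
  shows "f x \<le> Max (insert 0 {f x | x. P x})"
proof -
  have "{f x | x. P x} = f ` {x. P x}" by auto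
  then have "finite {f x | x. P x}" using assms(1) by simp
  then show ?thesis using assms(2) by (intro Max_ge) auto
qed

lemma finite_max_cliques: "wf_graph G \<Longrightarrow> finite {K. maximal_clique G K}"
  by (rule finite_subset[of _ "Pow (verts G)"])
     (auto simp: maximal_clique_def Defs.clique_def wf_graph_def)

lemma finite_vset: "wf_graph G \<Longrightarrow> finite {v. v \<in> verts G}"
  by (simp add: wf_graph_def)

lemma card_image_factor:
  assumes "finite K" "\<And>u u'. u \<in> K \<Longrightarrow> u' \<in> K \<Longrightarrow> h u = h u' \<Longrightarrow> f u = f u'"
  shows "card (f ` K) \<le> card (h ` K)"
proof -
  define g where "g B = f (SOME u. u \<in> K \<and> h u = B)" for B
  have "f ` K = g ` (h ` K)"
  proof (intro equalityI subsetI)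
    fix y assume "y \<in> f ` K"
    then obtain u where u: "u \<in> K" "y = f u" by blast
    have "(SOME u'. u' \<in> K \<and> h u' = h u) \<in> K \<and> h (SOME u'. u' \<in> K \<and> h u' = h u) = h u"
      by (rule someI[of _ u]) (use u in auto)
    then have "g (h u) = f u" unfolding g_def using assms(2) u by metis
    then show "y \<in> g ` h ` K" using u by force
  next
    fix y assume "y \<in> g ` h ` K"
    then obtain u where u: "u \<in> K" "y = g (h u)" by blast
    have "(SOME u'. u' \<in> K \<and> h u' = h u) \<in> K \<and> h (SOME u'. u' \<in> K \<and> h u' = h u) = h u"
      by (rule someI[of _ u]) (use u in auto)
    then have "g (h u) \<in> f ` K" unfolding g_def by blast
    then show "y \<in> f ` K" using u by simp
  qed
  then show ?thesis using assms(1) by (simp add: card_image_le)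
qed

lemma clique_sub_verts: "clique G K \<Longrightarrow> K \<subseteq> verts G"
  by (simp add: Defs.clique_def)

lemma maxc_clique: "maximal_clique G K \<Longrightarrow> clique G K"
  by (simp add: maximal_clique_def)

lemma clique_adj: "clique G K \<Longrightarrow> a \<in> K \<Longrightarrow> b \<in> K \<Longrightarrow> a \<noteq> b \<Longrightarrow> adj G a b"
  by (simp add: Defs.clique_def)

lemma maxclique_adj: "maximal_clique G K \<Longrightarrow> a \<in> K \<Longrightarrow> b \<in> K \<Longrightarrow> a \<noteq> b \<Longrightarrow> adj G a b"
  by (simp add: maximal_clique_def Defs.clique_def)

lemma self_twin: "v \<in> verts G \<Longrightarrow> v \<in> twin_class G v"
  by (simp add: twin_class_def)

lemma twin_class_eq:
  "a \<in> verts G \<Longrightarrow> b \<in> verts G \<Longrightarrow> twin_class G a = twin_class G b \<longleftrightarrow> closed_nbhd G a = closed_nbhd G b"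
  unfolding twin_class_def by auto

lemma max_clique_twin_closed:
  assumes wf: "wf_graph G" and K: "maximal_clique G K" and u: "u \<in> K" and w: "w \<in> verts G"
    and eq: "closed_nbhd G w = closed_nbhd G u"
  shows "w \<in> K"
proof -
  have "clique G (insert w K)"
  proof -
    have "\<forall>k\<in>K. k \<noteq> w \<longrightarrow> adj G w k"
    proof (intro ballI impI)
      fix k assume k: "k \<in> K" "k \<noteq> w"
      have "k \<in> closed_nbhd G u"
        using K u k unfolding maximal_clique_def Defs.clique_def closed_nbhd_def by auto
      then have "k \<in> closed_nbhd G w" using eq by simp
      then show "adj G w k" using k wf by (simp add: in_closed_nbhd)
    qed
    then show ?thesis using K w unfolding maximal_clique_def Defs.clique_def
      by (auto simp: adj_sym)
  qed
  then show ?thesis using K unfolding maximal_clique_def by blast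
qed

lemma closed_nbhd_cliques:
  assumes wf: "wf_graph G" and u: "u \<in> verts G"
  shows "x \<in> closed_nbhd G u \<longleftrightarrow> (\<exists>K\<in>max_cliques_at G u. x \<in> K)"
proof
  assume x: "x \<in> closed_nbhd G u"
  have xv: "x \<in> verts G" using x closed_nbhd_sub[OF u] by blast
  have xa: "x = u \<or> adj G u x" using x in_closed_nbhd[OF wf] by blast
  have "clique G {u, x}"
    unfolding Defs.clique_def
  proof (intro conjI ballI impI)
    show "{u, x} \<subseteq> verts G" using u xv by blast
    fix a b assume "a \<in> {u, x}" "b \<in> {u, x}" "a \<noteq> b"
    then have "(a = u \<and> b = x) \<or> (a = x \<and> b = u)" by blast
    then show "adj G a b" using xa \<open>a \<noteq> b\<close> adj_sym[of G u x] by blast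
  qed
  then obtain K where "maximal_clique G K" "{u,x} \<subseteq> K" using clique_extend[OF wf] by blast
  then show "\<exists>K\<in>max_cliques_at G u. x \<in> K" unfolding max_cliques_at_def by blast
next
  assume "\<exists>K\<in>max_cliques_at G u. x \<in> K"
  then obtain K where K: "maximal_clique G K" "u \<in> K" "x \<in> K" unfolding max_cliques_at_def by blast
  then have "x = u \<or> adj G u x" using maxclique_adj[OF K(1) K(2) K(3)] by blast
  then show "x \<in> closed_nbhd G u" using in_closed_nbhd[OF wf] by blast
qed

lemma mca_eq_imp_nbhd_eq:
  assumes wf: "wf_graph G" and uv: "u \<in> verts G" "u' \<in> verts G"
    and eq: "max_cliques_at G u = max_cliques_at G u'"
  shows "closed_nbhd G u = closed_nbhd G u'"
proof (rule set_eqI)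
  fix x
  show "x \<in> closed_nbhd G u \<longleftrightarrow> x \<in> closed_nbhd G u'"
    unfolding closed_nbhd_cliques[OF wf uv(1)] closed_nbhd_cliques[OF wf uv(2)] eq ..
qed

lemma nbhd_eq_imp_mca_eq:
  assumes wf: "wf_graph G" and uv: "u \<in> verts G" "u' \<in> verts G"
    and eq: "closed_nbhd G u = closed_nbhd G u'"
  shows "max_cliques_at G u = max_cliques_at G u'"
proof (rule set_eqI)
  fix K
  have 1: "u' \<in> K" if "maximal_clique G K" "u \<in> K" 
    using max_clique_twin_closed[OF wf that(1) that(2) uv(2)] eq by simp
  have 2: "u \<in> K" if "maximal_clique G K" "u' \<in> K" 
    using max_clique_twin_closed[OF wf that(1) that(2) uv(1)] eq by simp
  show "K \<in> max_cliques_at G u \<longleftrightarrow> K \<in> max_cliques_at G u'"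
    unfolding max_cliques_at_def using 1 2 by blast
qed

lemma class_eq_iff:
  "u \<in> verts G \<Longrightarrow> u' \<in> verts G \<Longrightarrow>
   clique_equiv_class G u = clique_equiv_class G u' \<longleftrightarrow> max_cliques_at G u = max_cliques_at G u'"
  unfolding clique_equiv_class_def by auto

lemma max_clique_in_nbhd:
  assumes wf: "wf_graph G" and K: "maximal_clique G K" and v: "v \<in> K"
  shows "K \<subseteq> closed_nbhd G v"
proof
  fix x assume x: "x \<in> K"
  have "x = v \<or> adj G v x" using maxclique_adj[OF K v x] by blast
  then show "x \<in> closed_nbhd G v" using in_closed_nbhd[OF wf] by blast
qed

lemma max_clique_verts: "maximal_clique G K \<Longrightarrow> K \<subseteq> verts G"
  by (simp add: maximal_clique_def Defs.clique_def)

lemma finite_max_clique: "wf_graph G \<Longrightarrow> maximal_clique G K \<Longrightarrow> finite K"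
  using max_clique_verts finite_verts finite_subset by metis

lemma finite_mca: "wf_graph G \<Longrightarrow> finite (max_cliques_at G v)"
  using finite_max_cliques[of G] unfolding max_cliques_at_def by (auto intro: finite_subset)

lemma finite_nbhd: "wf_graph G \<Longrightarrow> v \<in> verts G \<Longrightarrow> finite (closed_nbhd G v)"
  by (meson closed_nbhd_sub finite_verts finite_subset)

lemma omega_ge: "wf_graph G \<Longrightarrow> maximal_clique G K \<Longrightarrow> card (clique_equiv_class G ` K) \<le> omega_tilde G"
  unfolding omega_tilde_def
  by (rule Max_bound_ge[where f="\<lambda>K. card (clique_equiv_class G ` K)"]) (auto simp: finite_max_cliques)

lemma cideg_ge: "wf_graph G \<Longrightarrow> v \<in> verts G \<Longrightarrow> card (max_cliques_at G v) \<le> cideg G"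
  unfolding cideg_def
  by (rule Max_bound_ge[where f="\<lambda>v. card (max_cliques_at G v)"]) (simp_all add: finite_verts)

lemma cdeg_ge: "wf_graph G \<Longrightarrow> maximal_clique G K \<Longrightarrow>
  card {K'. maximal_clique G K' \<and> K' \<noteq> K \<and> K' \<inter> K \<noteq> {}} \<le> cdeg G"
  unfolding cdeg_def
  by (rule Max_bound_ge[where f="\<lambda>K. card {K'. maximal_clique G K' \<and> K' \<noteq> K \<and> K' \<inter> K \<noteq> {}}"])
     (auto simp: finite_max_cliques)

lemma twin_le_class:
  assumes wf: "wf_graph G" and K: "K \<subseteq> verts G" "finite K"
  shows "card (twin_class G ` K) \<le> card (clique_equiv_class G ` K)"
proof (rule card_image_factor[OF K(2)])
  fix u u' assume u: "u \<in> K" "u' \<in> K" "clique_equiv_class G u = clique_equiv_class G u'"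
  have uv: "u \<in> verts G" "u' \<in> verts G" using u K by auto
  have "max_cliques_at G u = max_cliques_at G u'" using class_eq_iff[OF uv] u by simp
  then have "closed_nbhd G u = closed_nbhd G u'" by (rule mca_eq_imp_nbhd_eq[OF wf uv])
  then show "twin_class G u = twin_class G u'" using twin_class_eq[OF uv] by simp
qed

lemma class_le_twin:
  assumes wf: "wf_graph G" and K: "K \<subseteq> verts G" "finite K"
  shows "card (clique_equiv_class G ` K) \<le> card (twin_class G ` K)"
proof (rule card_image_factor[OF K(2)])
  fix u u' assume u: "u \<in> K" "u' \<in> K" "twin_class G u = twin_class G u'"
  have uv: "u \<in> verts G" "u' \<in> verts G" using u K by auto
  have "closed_nbhd G u = closed_nbhd G u'" using twin_class_eq[OF uv] u by simp
  then have "max_cliques_at G u = max_cliques_at G u'" by (rule nbhd_eq_imp_mca_eq[OF wf uv])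
  then show "clique_equiv_class G u = clique_equiv_class G u'" using class_eq_iff[OF uv] by simp
qed

lemma twin_mem_closed:
  assumes wf: "wf_graph G" and K: "maximal_clique G K" and x: "x \<in> verts G"
    and t: "twin_class G x \<in> twin_class G ` K"
  shows "x \<in> K"
proof -
  obtain y where y: "y \<in> K" "twin_class G x = twin_class G y" using t by (rule imageE) simp
  have yv: "y \<in> verts G" using y(1) max_clique_verts[OF K] by (rule subsetD[rotated])
  have "closed_nbhd G x = closed_nbhd G y" using twin_class_eq[OF x yv] y(2) by simp
  then show ?thesis by (rule max_clique_twin_closed[OF wf K y(1) x])
qed

lemma TB_cideg:
  assumes wf: "wf_graph G" and v: "v \<in> verts G"
  shows "card (max_cliques_at G v) \<le> 2 ^ card (twin_class G ` closed_nbhd G v)"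
proof -
  let ?T = "twin_class G ` closed_nbhd G v"
  have inj: "inj_on (\<lambda>K. twin_class G ` K) (max_cliques_at G v)"
  proof (rule inj_onI)
    fix K1 K2 assume K1: "K1 \<in> max_cliques_at G v" and K2: "K2 \<in> max_cliques_at G v"
      and eq: "twin_class G ` K1 = twin_class G ` K2"
    have M1: "maximal_clique G K1" using K1 by (simp add: max_cliques_at_def)
    have M2: "maximal_clique G K2" using K2 by (simp add: max_cliques_at_def)
    have a: "K1 \<subseteq> K2"
    proof (rule subsetI)
      fix x assume x: "x \<in> K1"
      have xv: "x \<in> verts G" using x max_clique_verts[OF M1] by (rule subsetD[rotated])
      have "twin_class G x \<in> twin_class G ` K2" using eq x by (metis imageI)
      then show "x \<in> K2" by (rule twin_mem_closed[OF wf M2 xv])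
    qed
    have b: "K2 \<subseteq> K1"
    proof (rule subsetI)
      fix x assume x: "x \<in> K2"
      have xv: "x \<in> verts G" using x max_clique_verts[OF M2] by (rule subsetD[rotated])
      have "twin_class G x \<in> twin_class G ` K1" using eq x by (metis imageI)
      then show "x \<in> K1" by (rule twin_mem_closed[OF wf M1 xv])
    qed
    show "K1 = K2" using a b by (rule equalityI)
  qed
  have sub: "(\<lambda>K. twin_class G ` K) ` max_cliques_at G v \<subseteq> Pow ?T"
  proof (rule subsetI)
    fix S assume "S \<in> (\<lambda>K. twin_class G ` K) ` max_cliques_at G v"
    then obtain K where K: "K \<in> max_cliques_at G v" "S = twin_class G ` K" by (rule imageE)
    have "K \<subseteq> closed_nbhd G v"
      using K(1) max_clique_in_nbhd[OF wf] unfolding max_cliques_at_def by simp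
    then show "S \<in> Pow ?T" using K(2) by (simp add: image_mono)
  qed
  have fin: "finite ?T" using finite_nbhd[OF wf v] by (rule finite_imageI)
  have "card (max_cliques_at G v) = card ((\<lambda>K. twin_class G ` K) ` max_cliques_at G v)"
    using card_image[OF inj] by simp
  also have "\<dots> \<le> card (Pow ?T)" by (rule card_mono[OF _ sub]) (simp add: fin)
  also have "\<dots> = 2 ^ card ?T" using fin by (simp add: card_Pow)
  finally show ?thesis .
qed

lemma TB_omega:
  assumes wf: "wf_graph G" and K: "maximal_clique G K"
    and D: "\<forall>v\<in>verts G. card (twin_class G ` closed_nbhd G v) \<le> D"
  shows "card (clique_equiv_class G ` K) \<le> D"
proof (cases "K = {}")
  case True then show ?thesis by simp
next
  case False
  then obtain v where v: "v \<in> K" by blast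
  have Kv: "K \<subseteq> verts G" "finite K" using max_clique_verts[OF K] finite_max_clique[OF wf K] by auto
  have vV: "v \<in> verts G" using v Kv by auto
  have "card (clique_equiv_class G ` K) \<le> card (twin_class G ` K)" by (rule class_le_twin[OF wf Kv])
  also have "\<dots> \<le> card (twin_class G ` closed_nbhd G v)"
    by (rule card_mono) (use finite_nbhd[OF wf vV] max_clique_in_nbhd[OF wf K v] in auto)
  also have "\<dots> \<le> D" using D vV by blast
  finally show ?thesis .
qed

lemma TB_imp_P1:
  assumes wf: "wf_graph G" and D: "\<forall>v\<in>verts G. card (twin_class G ` closed_nbhd G v) \<le> D"
  shows "omega_tilde G \<le> D + 2^D \<and> cideg G \<le> D + 2^D"
proof
  show "omega_tilde G \<le> D + 2^D" unfolding omega_tilde_def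
  proof (rule Max_bound_le[where f="\<lambda>K. card (clique_equiv_class G ` K)" and P="maximal_clique G"])
    fix K assume K: "maximal_clique G K"
    have "card (clique_equiv_class G ` K) \<le> D" by (rule TB_omega[OF wf K D])
    then show "card (clique_equiv_class G ` K) \<le> D + 2^D" by simp
  qed
  have "card (max_cliques_at G v) \<le> D + 2^D" if "v \<in> verts G" for v
  proof -
    have "card (max_cliques_at G v) \<le> 2 ^ card (twin_class G ` closed_nbhd G v)"
      by (rule TB_cideg[OF wf that])
    also have "\<dots> \<le> 2 ^ D" using D that by (intro power_increasing) auto
    finally show ?thesis by simp
  qed
  then show "cideg G \<le> D + 2^D" unfolding cideg_def by (intro Max_bound_le) auto
qed

lemma P1_imp_TB:
  assumes wf: "wf_graph G" and k: "omega_tilde G \<le> k" "cideg G \<le> k" and v: "v \<in> verts G"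
  shows "card (twin_class G ` closed_nbhd G v) \<le> k * k"
proof -
  have sub: "twin_class G ` closed_nbhd G v \<subseteq> (\<Union>K\<in>max_cliques_at G v. twin_class G ` K)"
  proof (rule subsetI)
    fix t assume "t \<in> twin_class G ` closed_nbhd G v"
    then obtain x where x: "x \<in> closed_nbhd G v" "t = twin_class G x" by (rule imageE)
    obtain K where "K \<in> max_cliques_at G v" "x \<in> K"
      using closed_nbhd_cliques[OF wf v, THEN iffD1, OF x(1)] by (rule bexE)
    then show "t \<in> (\<Union>K\<in>max_cliques_at G v. twin_class G ` K)" using x by blast
  qed
  have each: "card (twin_class G ` K) \<le> k" if "K \<in> max_cliques_at G v" for K
  proof -
    have K: "maximal_clique G K" using that by (simp add: max_cliques_at_def)
    have "card (twin_class G ` K) \<le> card (clique_equiv_class G ` K)"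
      by (rule twin_le_class[OF wf max_clique_verts[OF K] finite_max_clique[OF wf K]])
    also have "\<dots> \<le> omega_tilde G" by (rule omega_ge[OF wf K])
    finally show ?thesis using k by simp
  qed
  have "card (twin_class G ` closed_nbhd G v) \<le> card (\<Union>K\<in>max_cliques_at G v. twin_class G ` K)"
  proof (rule card_mono[OF _ sub])
    show "finite (\<Union>K\<in>max_cliques_at G v. twin_class G ` K)"
    proof (rule finite_UN_I[OF finite_mca[OF wf]])
      fix K assume "K \<in> max_cliques_at G v"
      then have "maximal_clique G K" by (simp add: max_cliques_at_def)
      then show "finite (twin_class G ` K)" using finite_max_clique[OF wf] by blast
    qed
  qed
  also have "\<dots> \<le> (\<Sum>K\<in>max_cliques_at G v. card (twin_class G ` K))"
    by (rule card_UN_le) (rule finite_mca[OF wf])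
  also have "\<dots> \<le> card (max_cliques_at G v) * k"
    using sum_bounded_above[of "max_cliques_at G v" "\<lambda>K. card (twin_class G ` K)" k] each by simp
  also have "\<dots> \<le> k * k" using cideg_ge[OF wf v] k by simp
  finally show ?thesis .
qed

lemma verts_TR: "verts (twin_reduction G) = twin_class G ` verts G"
  by (simp add: twin_reduction_def)

lemma adj_TR:
  "adj (twin_reduction G) A B \<longleftrightarrow> A \<in> twin_class G ` verts G \<and> B \<in> twin_class G ` verts G \<and> A \<noteq> B
     \<and> (\<exists>a\<in>A. \<exists>b\<in>B. adj G a b)" (is "?L \<longleftrightarrow> ?R")
proof
  assume ?L
  then obtain A' B' where e: "{A, B} = {A', B'}" and P: "A' \<in> twin_class G ` verts G"
    "B' \<in> twin_class G ` verts G" "A' \<noteq> B'" "\<exists>a\<in>A'. \<exists>b\<in>B'. adj G a b"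
    unfolding adj_def twin_reduction_def by auto
  from e have "(A = A' \<and> B = B') \<or> (A = B' \<and> B = A')" by (simp add: doubleton_eq_iff)
  then show ?R
  proof
    assume "A = A' \<and> B = B'" then show ?R using P by blast
  next
    assume h: "A = B' \<and> B = A'"
    have "\<exists>a\<in>A. \<exists>b\<in>B. adj G a b" using P(4) h adj_sym[of G] by blast
    then show ?R using P h by blast
  qed
next
  assume ?R
  then show ?L unfolding adj_def twin_reduction_def by auto
qed

lemma TB_imp_P2:
  assumes wf: "wf_graph G" and D: "\<forall>v\<in>verts G. card (twin_class G ` closed_nbhd G v) \<le> D"
  shows "max_degree (twin_reduction G) \<le> D"
  unfolding max_degree_def
proof (rule Max_bound_le[where P="\<lambda>A. A \<in> verts (twin_reduction G)"])
  fix A assume "A \<in> verts (twin_reduction G)"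
  then obtain v where v: "v \<in> verts G" "A = twin_class G v" by (auto simp: verts_TR)
  have sub: "{B \<in> verts (twin_reduction G). adj (twin_reduction G) A B} \<subseteq> twin_class G ` closed_nbhd G v"
  proof (rule subsetI)
    fix B assume "B \<in> {B \<in> verts (twin_reduction G). adj (twin_reduction G) A B}"
    then have "adj (twin_reduction G) A B" by simp
    then obtain w a b where w: "w \<in> verts G" "B = twin_class G w" and ab: "a \<in> A" "b \<in> B" "adj G a b"
      unfolding adj_TR by blast
    have av: "a \<in> verts G" and na: "closed_nbhd G a = closed_nbhd G v"
      using ab(1) v(2) unfolding twin_class_def by auto
    have bv: "b \<in> verts G" and nb: "closed_nbhd G b = closed_nbhd G w"
      using ab(2) w(2) unfolding twin_class_def by auto
    have "b \<in> closed_nbhd G a" using ab(3) bv by (simp add: closed_nbhd_def)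
    then have "b \<in> closed_nbhd G v" using na by simp
    moreover have "twin_class G b = B" using twin_class_eq[OF bv w(1)] nb w(2) by simp
    ultimately show "B \<in> twin_class G ` closed_nbhd G v" by (metis imageI)
  qed
  have "card {B \<in> verts (twin_reduction G). adj (twin_reduction G) A B} \<le> card (twin_class G ` closed_nbhd G v)"
    by (rule card_mono[OF _ sub]) (simp add: finite_nbhd[OF wf v(1)])
  also have "\<dots> \<le> D" using D v(1) by blast
  finally show "card {B \<in> verts (twin_reduction G). adj (twin_reduction G) A B} \<le> D" .
qed

lemma P2_imp_TB:
  assumes wf: "wf_graph G" and d: "max_degree (twin_reduction G) \<le> d" and v: "v \<in> verts G"
  shows "card (twin_class G ` closed_nbhd G v) \<le> d + 1"
proof -
  let ?R = "twin_reduction G"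
  let ?A = "twin_class G v"
  have Av: "?A \<in> verts ?R" using v by (simp add: verts_TR)
  have fin: "finite {A. A \<in> verts ?R}" using finite_verts[OF wf] by (simp add: verts_TR)
  have deg: "card {B \<in> verts ?R. adj ?R ?A B} \<le> max_degree ?R"
    unfolding max_degree_def
    by (rule Max_bound_ge[where P="\<lambda>A. A \<in> verts ?R" and f="\<lambda>A. card {B \<in> verts ?R. adj ?R A B}", OF fin Av])
  have sub: "twin_class G ` closed_nbhd G v \<subseteq> insert ?A {B \<in> verts ?R. adj ?R ?A B}"
  proof (rule subsetI)
    fix B assume "B \<in> twin_class G ` closed_nbhd G v"
    then obtain u where u: "u \<in> closed_nbhd G v" "B = twin_class G u" by (rule imageE)
    have uv: "u \<in> verts G" using u(1) closed_nbhd_sub[OF v] by blast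
    show "B \<in> insert ?A {B \<in> verts ?R. adj ?R ?A B}"
    proof (cases "B = ?A")
      case True then show ?thesis by simp
    next
      case False
      then have "u \<noteq> v" using u(2) by blast
      then have a: "adj G v u" using u(1) in_closed_nbhd[OF wf] by blast
      have "adj ?R ?A B" unfolding adj_TR
        using v uv u(2) False a self_twin[OF v] self_twin[OF uv] by blast
      moreover have "B \<in> verts ?R" using uv u(2) by (simp add: verts_TR)
      ultimately show ?thesis by simp
    qed
  qed
  have fin2: "finite (insert ?A {B \<in> verts ?R. adj ?R ?A B})"
    using finite_verts[OF wf] by (simp add: verts_TR)
  have "card (twin_class G ` closed_nbhd G v) \<le> card (insert ?A {B \<in> verts ?R. adj ?R ?A B})"
    by (rule card_mono[OF fin2 sub])
  also have "\<dots> \<le> card {B \<in> verts ?R. adj ?R ?A B} + 1" by (simp add: card_insert_le_m1 card_insert_if)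
  also have "\<dots> \<le> d + 1" using deg d by simp
  finally show ?thesis .
qed

lemma P1_imp_P5:
  assumes wf: "wf_graph G" and k: "omega_tilde G \<le> k" "cideg G \<le> k"
  shows "cdeg G \<le> k * k"
  unfolding cdeg_def
proof (rule Max_bound_le[where P="maximal_clique G"])
  fix K assume K: "maximal_clique G K"
  have Kv: "K \<subseteq> verts G" "finite K" using max_clique_verts[OF K] finite_max_clique[OF wf K] by auto
  let ?S = "{K'. maximal_clique G K' \<and> K' \<noteq> K \<and> K' \<inter> K \<noteq> {}}"
  have sub: "?S \<subseteq> \<Union> (max_cliques_at G ` K)"
  proof (rule subsetI)
    fix K' assume "K' \<in> ?S"
    then have K': "maximal_clique G K'" "K' \<inter> K \<noteq> {}" by auto
    then obtain u where u: "u \<in> K'" "u \<in> K" by blast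
    then have "K' \<in> max_cliques_at G u" using K' by (simp add: max_cliques_at_def)
    then show "K' \<in> \<Union> (max_cliques_at G ` K)" using u by blast
  qed
  have fin: "finite (max_cliques_at G ` K)" using Kv by simp
  have each: "card M \<le> k" if M: "M \<in> max_cliques_at G ` K" for M
  proof -
    obtain u where u: "u \<in> K" "M = max_cliques_at G u" using M by (rule imageE)
    have uv: "u \<in> verts G" using u Kv by blast
    show ?thesis using cideg_ge[OF wf uv] k u by simp
  qed
  have cm: "card (max_cliques_at G ` K) \<le> card (clique_equiv_class G ` K)"
  proof (rule card_image_factor[OF Kv(2)])
    fix u u' assume u: "u \<in> K" "u' \<in> K" "clique_equiv_class G u = clique_equiv_class G u'"
    have uv: "u \<in> verts G" "u' \<in> verts G" using u Kv by auto
    show "max_cliques_at G u = max_cliques_at G u'" using class_eq_iff[OF uv] u(3) by simp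
  qed
  have "card ?S \<le> card (\<Union> (max_cliques_at G ` K))"
  proof (rule card_mono[OF _ sub])
    show "finite (\<Union> (max_cliques_at G ` K))"
      using fin finite_mca[OF wf] by blast
  qed
  also have "\<dots> \<le> (\<Sum>M\<in>max_cliques_at G ` K. card M)"
    by (rule card_Union_le_sum_card)
  also have "\<dots> \<le> card (max_cliques_at G ` K) * k"
    using sum_bounded_above[of "max_cliques_at G ` K" "\<lambda>M. card M" k] each by simp
  also have "\<dots> \<le> k * k" using cm omega_ge[OF wf K] k by simp
  finally show "card ?S \<le> k * k" .
qed

lemma P5_imp_P1:
  assumes wf: "wf_graph G" and k: "cdeg G \<le> k"
  shows "omega_tilde G \<le> 2^(k+1) + (k+1) \<and> cideg G \<le> 2^(k+1) + (k+1)"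
proof
  let ?Nb = "\<lambda>K. {K'. maximal_clique G K' \<and> K' \<noteq> K \<and> K' \<inter> K \<noteq> {}}"
  have nbk: "card (?Nb K) \<le> k" if "maximal_clique G K" for K
    using cdeg_ge[OF wf that] k by simp
  have finNb: "finite (?Nb K)" for K
    using finite_max_cliques[OF wf] by (rule finite_subset[rotated]) blast
  have ins: "card (insert K (?Nb K)) \<le> k + 1" if "maximal_clique G K" for K
    using nbk[OF that] card_insert_le_m1 finNb[of K]
    by (metis (no_types, lifting) Suc_eq_plus1 card_insert_if le_SucI not_less_eq_eq)
  show "omega_tilde G \<le> 2^(k+1) + (k+1)"
    unfolding omega_tilde_def
  proof (rule Max_bound_le[where P="maximal_clique G"])
    fix K assume K: "maximal_clique G K"
    have Kv: "K \<subseteq> verts G" "finite K" using max_clique_verts[OF K] finite_max_clique[OF wf K] by auto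
    have c1: "card (clique_equiv_class G ` K) \<le> card (max_cliques_at G ` K)"
    proof (rule card_image_factor[OF Kv(2)])
      fix u u' assume u: "u \<in> K" "u' \<in> K" "max_cliques_at G u = max_cliques_at G u'"
      have uv: "u \<in> verts G" "u' \<in> verts G" using u Kv by auto
      show "clique_equiv_class G u = clique_equiv_class G u'" using class_eq_iff[OF uv] u(3) by simp
    qed
    have sub: "max_cliques_at G ` K \<subseteq> Pow (insert K (?Nb K))"
    proof (rule subsetI)
      fix M assume "M \<in> max_cliques_at G ` K"
      then obtain u where u: "u \<in> K" "M = max_cliques_at G u" by (rule imageE)
      show "M \<in> Pow (insert K (?Nb K))" using u unfolding max_cliques_at_def by blast
    qed
    have "card (max_cliques_at G ` K) \<le> card (Pow (insert K (?Nb K)))"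
      by (rule card_mono[OF _ sub]) (simp add: finNb)
    also have "\<dots> = 2 ^ card (insert K (?Nb K))" by (simp add: card_Pow finNb)
    also have "\<dots> \<le> 2 ^ (k+1)" by (rule power_increasing[OF ins[OF K]]) simp
    finally show "card (clique_equiv_class G ` K) \<le> 2^(k+1) + (k+1)" using c1 by simp
  qed
  show "cideg G \<le> 2^(k+1) + (k+1)"
    unfolding cideg_def
  proof (rule Max_bound_le[where P="\<lambda>v. v \<in> verts G"])
    fix v assume v: "v \<in> verts G"
    have "clique G {v}" using v by (simp add: Defs.clique_def)
    then obtain K0 where K0: "maximal_clique G K0" "{v} \<subseteq> K0" using clique_extend[OF wf] by blast
    have sub: "max_cliques_at G v \<subseteq> insert K0 (?Nb K0)"
      using K0 unfolding max_cliques_at_def by blast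
    have "card (max_cliques_at G v) \<le> card (insert K0 (?Nb K0))"
      by (rule card_mono[OF _ sub]) (simp add: finNb)
    also have "\<dots> \<le> k + 1" by (rule ins[OF K0(1)])
    finally show "card (max_cliques_at G v) \<le> 2^(k+1) + (k+1)" by simp
  qed
qed

lemma theta_ge: "wf_graph G \<Longrightarrow> v \<in> verts G \<Longrightarrow>
  clique_cover_number (induced_subgraph G (closed_nbhd G v)) \<le> theta_star G"
  unfolding theta_star_def
  by (rule Max_bound_ge[where f="\<lambda>v. clique_cover_number (induced_subgraph G (closed_nbhd G v))"])
     (simp_all add: finite_verts)

lemma alpha_ge: "wf_graph G \<Longrightarrow> v \<in> verts G \<Longrightarrow>
  independence_number (induced_subgraph G (closed_nbhd G v)) \<le> alpha_star G"
  unfolding alpha_star_def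
  by (rule Max_bound_ge[where f="\<lambda>v. independence_number (induced_subgraph G (closed_nbhd G v))"])
     (simp_all add: finite_verts)

lemma P1_imp_theta:
  assumes wf: "wf_graph G" and k: "cideg G \<le> k"
  shows "theta_star G \<le> k"
  unfolding theta_star_def
proof (rule Max_bound_le[where P="\<lambda>v. v \<in> verts G"])
  fix v assume v: "v \<in> verts G"
  let ?H = "induced_subgraph G (closed_nbhd G v)"
  have cov: "finite (max_cliques_at G v) \<and> card (max_cliques_at G v) = card (max_cliques_at G v) \<and>
      (\<forall>K\<in>max_cliques_at G v. clique ?H K) \<and> \<Union> (max_cliques_at G v) = verts ?H"
  proof (intro conjI ballI)
    show "finite (max_cliques_at G v)" by (rule finite_mca[OF wf])
    show "card (max_cliques_at G v) = card (max_cliques_at G v)" ..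
  next
    fix K assume "K \<in> max_cliques_at G v"
    then have K: "maximal_clique G K" "v \<in> K" by (auto simp: max_cliques_at_def)
    have sub: "K \<subseteq> closed_nbhd G v" by (rule max_clique_in_nbhd[OF wf K])
    show "clique ?H K" unfolding Defs.clique_def verts_induced
    proof (intro conjI ballI impI)
      show "K \<subseteq> closed_nbhd G v" by (rule sub)
      fix a b assume "a \<in> K" "b \<in> K" "a \<noteq> b"
      then show "adj ?H a b" unfolding adj_induced using maxclique_adj[OF K(1)] sub by blast
    qed
  next
    show "\<Union> (max_cliques_at G v) = verts ?H"
    proof (rule set_eqI)
      fix x show "x \<in> \<Union> (max_cliques_at G v) \<longleftrightarrow> x \<in> verts ?H"
        unfolding verts_induced Union_iff closed_nbhd_cliques[OF wf v] by blast
    qed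
  qed
  have "clique_cover_number ?H \<le> card (max_cliques_at G v)"
    unfolding clique_cover_number_def by (rule Least_le) (use cov in blast)
  also have "\<dots> \<le> k" using cideg_ge[OF wf v] k by simp
  finally show "clique_cover_number ?H \<le> k" .
qed

lemma alpha_le_theta:
  assumes wf: "wf_graph H"
  shows "independence_number H \<le> clique_cover_number H"
proof -
  have ex: "\<exists>k. \<exists>\<K>. finite \<K> \<and> card \<K> = k \<and> (\<forall>K\<in>\<K>. clique H K) \<and> \<Union>\<K> = verts H"
    by (rule exI, rule exI[of _ "(\<lambda>x. {x}) ` verts H"])
       (auto simp: finite_verts[OF wf] Defs.clique_def)
  obtain \<K> where K: "finite \<K>" "card \<K> = clique_cover_number H" "\<forall>K\<in>\<K>. clique H K" "\<Union>\<K> = verts H"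
    using LeastI_ex[OF ex] unfolding clique_cover_number_def by blast
  show ?thesis unfolding independence_number_def
  proof (rule Max_bound_le[where P="independent H"])
    fix I assume I: "independent H I"
    have IV: "I \<subseteq> verts H" using I by (simp add: independent_def)
    define g where "g x = (SOME K. K \<in> \<K> \<and> x \<in> K)" for x
    have g: "g x \<in> \<K> \<and> x \<in> g x" if "x \<in> I" for x
    proof -
      have "\<exists>K. K \<in> \<K> \<and> x \<in> K" using that IV K(4) by blast
      then show ?thesis unfolding g_def by (rule someI_ex)
    qed
    have "inj_on g I"
    proof (rule inj_onI)
      fix x y assume xy: "x \<in> I" "y \<in> I" "g x = g y"
      show "x = y"
      proof (rule ccontr)
        assume "x \<noteq> y"
        have "clique H (g x)" using g[OF xy(1)] K(3) by blast
        then have "adj H x y" using clique_adj g[OF xy(1)] g[OF xy(2)] xy(3) \<open>x \<noteq> y\<close> by metis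
        then show False using I xy unfolding independent_def by blast
      qed
    qed
    then have "card I = card (g ` I)" by (simp add: card_image)
    also have "\<dots> \<le> card \<K>" by (rule card_mono[OF K(1)]) (use g in blast)
    finally show "card I \<le> clique_cover_number H" using K(2) by simp
  qed
qed

lemma P4_imp_alpha:
  assumes wf: "wf_graph G"
  shows "alpha_star G \<le> theta_star G"
  unfolding alpha_star_def
proof (rule Max_bound_le[where P="\<lambda>v. v \<in> verts G"])
  fix v assume v: "v \<in> verts G"
  have wf': "wf_graph (induced_subgraph G (closed_nbhd G v))"
    by (rule wf_induced[OF wf closed_nbhd_sub[OF v]])
  show "independence_number (induced_subgraph G (closed_nbhd G v)) \<le> theta_star G"
    using alpha_le_theta[OF wf'] theta_ge[OF wf v] by (rule le_trans)
qed

lemma verts_star: "verts (star_graph n) = insert Cv (Xv ` {1..n})"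
  by (simp add: star_graph_def)
lemma verts_MKI: "verts (matching_KI n) = XY n" by (simp add: matching_KI_def)
lemma verts_MKK: "verts (matching_KK n) = XY n" by (simp add: matching_KK_def)
lemma verts_AKK: "verts (antimatching_KK n) = XY n" by (simp add: antimatching_KK_def)
lemma verts_HKK: "verts (halfgraph_KK n) = XY n" by (simp add: halfgraph_KK_def)

lemma adj_star:
  "adj (star_graph n) Cv (Xv i) \<longleftrightarrow> i \<in> {1..n}"
  "adj (star_graph n) (Xv i) Cv \<longleftrightarrow> i \<in> {1..n}"
  "\<not> adj (star_graph n) (Xv i) (Xv j)"
  "\<not> adj (star_graph n) Cv Cv"
  by (auto simp: adj_def star_graph_def doubleton_eq_iff)

lemma adj_MKI:
  assumes "i \<in> {1..n}" "j \<in> {1..n}"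
  shows "adj (matching_KI n) (Xv i) (Xv j) \<longleftrightarrow> i \<noteq> j"
    "adj (matching_KI n) (Xv i) (Yv j) \<longleftrightarrow> i = j"
    "adj (matching_KI n) (Yv i) (Xv j) \<longleftrightarrow> i = j"
    "adj (matching_KI n) (Yv i) (Yv j) \<longleftrightarrow> False"
  using assms by (auto simp: adj_def matching_KI_def doubleton_eq_iff)

lemma adj_MKK:
  assumes "i \<in> {1..n}" "j \<in> {1..n}"
  shows "adj (matching_KK n) (Xv i) (Xv j) \<longleftrightarrow> i \<noteq> j"
    "adj (matching_KK n) (Xv i) (Yv j) \<longleftrightarrow> i = j"
    "adj (matching_KK n) (Yv i) (Xv j) \<longleftrightarrow> i = j"
    "adj (matching_KK n) (Yv i) (Yv j) \<longleftrightarrow> i \<noteq> j"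
  using assms by (auto simp: adj_def matching_KK_def doubleton_eq_iff)

lemma adj_AKK:
  assumes "i \<in> {1..n}" "j \<in> {1..n}"
  shows "adj (antimatching_KK n) (Xv i) (Xv j) \<longleftrightarrow> i \<noteq> j"
    "adj (antimatching_KK n) (Xv i) (Yv j) \<longleftrightarrow> i \<noteq> j"
    "adj (antimatching_KK n) (Yv i) (Xv j) \<longleftrightarrow> i \<noteq> j"
    "adj (antimatching_KK n) (Yv i) (Yv j) \<longleftrightarrow> i \<noteq> j"
  using assms by (auto simp: adj_def antimatching_KK_def doubleton_eq_iff)

lemma adj_HKK:
  assumes "i \<in> {1..n}" "j \<in> {1..n}"
  shows "adj (halfgraph_KK n) (Xv i) (Xv j) \<longleftrightarrow> i \<noteq> j"
    "adj (halfgraph_KK n) (Xv i) (Yv j) \<longleftrightarrow> i \<le> j"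
    "adj (halfgraph_KK n) (Yv i) (Xv j) \<longleftrightarrow> j \<le> i"
    "adj (halfgraph_KK n) (Yv i) (Yv j) \<longleftrightarrow> i \<noteq> j"
  using assms by (auto simp: adj_def halfgraph_KK_def doubleton_eq_iff)


lemma pair_clique: "a \<in> verts G \<Longrightarrow> b \<in> verts G \<Longrightarrow> adj G a b \<Longrightarrow> clique G {a, b}"
  unfolding Defs.clique_def using adj_sym[of G a b] by blast

lemma omega_lb:
  assumes wf: "wf_graph H" and XV: "X \<subseteq> verts H" and cl: "clique H X"
    and dist: "\<forall>x\<in>X. \<forall>x'\<in>X. x \<noteq> x' \<longrightarrow> (\<exists>z\<in>verts H. z \<notin> X \<and> adj H x z \<noteq> adj H x' z)"
  shows "card X \<le> omega_tilde H"
proof -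
  obtain K where K: "maximal_clique H K" "X \<subseteq> K" using clique_extend[OF wf cl] by blast
  have Kf: "finite K" by (rule finite_max_clique[OF wf K(1)])
  have key: "\<not> (adj H x z \<and> \<not> adj H x' z)"
    if x: "x \<in> X" "x' \<in> X" "z \<in> verts H" "z \<notin> X" and m: "max_cliques_at H x = max_cliques_at H x'" for x x' z
  proof
    assume a: "adj H x z \<and> \<not> adj H x' z"
    have xv: "x \<in> verts H" using x(1) XV by blast
    obtain K' where K': "maximal_clique H K'" "{x, z} \<subseteq> K'"
      using clique_extend[OF wf pair_clique[OF xv x(3)]] a by blast
    have "K' \<in> max_cliques_at H x" using K' by (simp add: max_cliques_at_def)
    then have "K' \<in> max_cliques_at H x'" using m by simp
    then have "x' \<in> K'" by (simp add: max_cliques_at_def)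
    moreover have "x' \<noteq> z" using x by blast
    ultimately have "adj H x' z" using maxclique_adj[OF K'(1)] K'(2) by blast
    then show False using a by blast
  qed
  have inj: "inj_on (clique_equiv_class H) X"
  proof (rule inj_onI)
    fix x x' assume xx: "x \<in> X" "x' \<in> X" "clique_equiv_class H x = clique_equiv_class H x'"
    have xv: "x \<in> verts H" "x' \<in> verts H" using xx XV by auto
    have m: "max_cliques_at H x = max_cliques_at H x'" using class_eq_iff[OF xv] xx(3) by simp
    show "x = x'"
    proof (rule ccontr)
      assume ne: "x \<noteq> x'"
      obtain z where z: "z \<in> verts H" "z \<notin> X" "adj H x z \<noteq> adj H x' z" using dist xx ne by blast
      show False using key[OF xx(1) xx(2) z(1) z(2) m] key[OF xx(2) xx(1) z(1) z(2) m[symmetric]] z(3)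
        by blast
    qed
  qed
  have "card X = card (clique_equiv_class H ` X)" using inj by (simp add: card_image)
  also have "\<dots> \<le> card (clique_equiv_class H ` K)"
    by (rule card_mono) (use Kf K(2) in auto)
  also have "\<dots> \<le> omega_tilde H" by (rule omega_ge[OF wf K(1)])
  finally show ?thesis .
qed

lemma XY_pattern_omega:
  assumes wf: "wf_graph G" and P: "verts P = XY n" and emb: "contains_induced G P"
    and xx: "\<forall>i\<in>{1..n}. \<forall>j\<in>{1..n}. adj P (Xv i) (Xv j) \<longleftrightarrow> i \<noteq> j"
    and dist: "\<forall>i\<in>{1..n}. \<forall>j\<in>{1..n}. i \<noteq> j \<longrightarrow> (\<exists>k\<in>{1..n}. adj P (Xv i) (Yv k) \<noteq> adj P (Xv j) (Yv k))"
  shows "\<exists>S\<subseteq>verts G. n \<le> omega_tilde (induced_subgraph G S)"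
proof -
  obtain f where f: "inj_on f (verts P)" "f ` verts P \<subseteq> verts G"
    "\<forall>u\<in>verts P. \<forall>v\<in>verts P. adj G (f u) (f v) \<longleftrightarrow> adj P u v"
    using emb unfolding contains_induced_def by blast
  define S where "S = f ` verts P"
  define H where "H = induced_subgraph G S"
  have wfH: "wf_graph H" unfolding H_def S_def by (rule wf_induced[OF wf f(2)])
  have adjH: "adj H (f a) (f b) \<longleftrightarrow> adj P a b" if "a \<in> verts P" "b \<in> verts P" for a b
    unfolding H_def adj_induced S_def using f(3) that by blast
  have XinP: "Xv i \<in> verts P" "Yv i \<in> verts P" if "i \<in> {1..n}" for i
    using that P by (auto simp: XY_def)
  define X where "X = f ` Xv ` {1..n}"
  have XS: "X \<subseteq> verts H" unfolding X_def H_def S_def verts_induced using XinP by blast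
  have cl: "clique H X" unfolding Defs.clique_def
  proof (intro conjI ballI impI)
    show "X \<subseteq> verts H" by (rule XS)
    fix a b assume ab: "a \<in> X" "b \<in> X" "a \<noteq> b"
    then obtain i j where ij: "i \<in> {1..n}" "j \<in> {1..n}" "a = f (Xv i)" "b = f (Xv j)"
      unfolding X_def by blast
    have "i \<noteq> j" using ab ij by blast
    then show "adj H a b" using adjH[OF XinP(1)[OF ij(1)] XinP(1)[OF ij(2)]] xx ij by simp
  qed
  have dist': "\<forall>x\<in>X. \<forall>x'\<in>X. x \<noteq> x' \<longrightarrow> (\<exists>z\<in>verts H. z \<notin> X \<and> adj H x z \<noteq> adj H x' z)"
  proof (intro ballI impI)
    fix a b assume ab: "a \<in> X" "b \<in> X" "a \<noteq> b"
    then obtain i j where ij: "i \<in> {1..n}" "j \<in> {1..n}" "a = f (Xv i)" "b = f (Xv j)"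
      unfolding X_def by blast
    have "i \<noteq> j" using ab ij by blast
    then obtain k where k: "k \<in> {1..n}" "adj P (Xv i) (Yv k) \<noteq> adj P (Xv j) (Yv k)" using dist ij by blast
    have zH: "f (Yv k) \<in> verts H" unfolding H_def S_def verts_induced using XinP(2)[OF k(1)] by blast
    have zX: "f (Yv k) \<notin> X"
    proof
      assume "f (Yv k) \<in> X"
      then obtain l where l: "l \<in> {1..n}" "f (Yv k) = f (Xv l)" unfolding X_def by blast
      then have "Yv k = Xv l" using f(1) XinP[OF l(1)] XinP[OF k(1)] by (meson inj_onD)
      then show False by simp
    qed
    show "\<exists>z\<in>verts H. z \<notin> X \<and> adj H a z \<noteq> adj H b z"
      using zH zX k(2) adjH[OF XinP(1)[OF ij(1)] XinP(2)[OF k(1)]] adjH[OF XinP(1)[OF ij(2)] XinP(2)[OF k(1)]] ij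
      by blast
  qed
  have cardX: "card X = n"
  proof -
    have "inj_on f (Xv ` {1..n})" by (rule inj_on_subset[OF f(1)]) (use XinP in blast)
    then have "card X = card (Xv ` {1..n})" unfolding X_def by (rule card_image)
    also have "\<dots> = n" by (simp add: card_image inj_on_def)
    finally show ?thesis .
  qed
  have "n \<le> omega_tilde H" using omega_lb[OF wfH XS cl dist'] cardX by simp
  moreover have "S \<subseteq> verts G" unfolding S_def by (rule f(2))
  ultimately show ?thesis unfolding H_def by blast
qed

lemma star_pattern_alpha:
  assumes wf: "wf_graph G" and emb: "contains_induced G (star_graph n)"
  shows "\<exists>S\<subseteq>verts G. n \<le> alpha_star (induced_subgraph G S)"
proof -
  let ?P = "star_graph n"
  obtain f where f: "inj_on f (verts ?P)" "f ` verts ?P \<subseteq> verts G"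
    "\<forall>u\<in>verts ?P. \<forall>v\<in>verts ?P. adj G (f u) (f v) \<longleftrightarrow> adj ?P u v"
    using emb unfolding contains_induced_def by blast
  define S where "S = f ` verts ?P"
  define H where "H = induced_subgraph G S"
  have wfH: "wf_graph H" unfolding H_def S_def by (rule wf_induced[OF wf f(2)])
  have adjH: "adj H (f a) (f b) \<longleftrightarrow> adj ?P a b" if "a \<in> verts ?P" "b \<in> verts ?P" for a b
    unfolding H_def adj_induced S_def using f(3) that by blast
  have inP: "Cv \<in> verts ?P" "\<And>i. i \<in> {1..n} \<Longrightarrow> Xv i \<in> verts ?P" by (auto simp: verts_star)
  define c where "c = f Cv"
  have cH: "c \<in> verts H" unfolding c_def H_def S_def verts_induced using inP by blast
  define L where "L = f ` Xv ` {1..n}"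
  define H' where "H' = induced_subgraph H (closed_nbhd H c)"
  have LN: "L \<subseteq> closed_nbhd H c"
  proof
    fix l assume "l \<in> L"
    then obtain i where i: "i \<in> {1..n}" "l = f (Xv i)" unfolding L_def by blast
    have "adj H c l" unfolding c_def i(2) using adjH[OF inP(1) inP(2)[OF i(1)]] adj_star i(1) by simp
    then show "l \<in> closed_nbhd H c" using in_closed_nbhd[OF wfH] by blast
  qed
  have ind: "independent H' L" unfolding independent_def
  proof (intro conjI ballI)
    show "L \<subseteq> verts H'" unfolding H'_def verts_induced by (rule LN)
    fix a b assume ab: "a \<in> L" "b \<in> L"
    then obtain i j where ij: "i \<in> {1..n}" "j \<in> {1..n}" "a = f (Xv i)" "b = f (Xv j)"
      unfolding L_def by blast
    have "\<not> adj H a b" using adjH[OF inP(2)[OF ij(1)] inP(2)[OF ij(2)]] adj_star ij by simp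
    then show "\<not> adj H' a b" unfolding H'_def adj_induced by blast
  qed
  have cardL: "card L = n"
  proof -
    have "inj_on f (Xv ` {1..n})" by (rule inj_on_subset[OF f(1)]) (use inP(2) in blast)
    then have "card L = card (Xv ` {1..n})" unfolding L_def by (rule card_image)
    also have "\<dots> = n" by (simp add: card_image inj_on_def)
    finally show ?thesis .
  qed
  have finI: "finite {I. independent H' I}"
  proof (rule finite_subset[of _ "Pow (verts H')"])
    show "{I. independent H' I} \<subseteq> Pow (verts H')" by (auto simp: independent_def)
    show "finite (Pow (verts H'))" unfolding H'_def verts_induced using finite_nbhd[OF wfH cH] by simp
  qed
  have "card L \<le> independence_number H'"
    unfolding independence_number_def
    by (rule Max_bound_ge[where f=card and P="independent H'", OF finI ind])
  also have "\<dots> \<le> alpha_star H" unfolding H'_def by (rule alpha_ge[OF wfH cH])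
  finally have "n \<le> alpha_star H" using cardL by simp
  moreover have "S \<subseteq> verts G" unfolding S_def by (rule f(2))
  ultimately show ?thesis unfolding H_def by blast
qed

lemma XY_cases:
  assumes "a \<in> XY n"
  obtains i where "i \<in> {1..n}" "a = Xv i" | i where "i \<in> {1..n}" "a = Yv i"
  using assms unfolding XY_def by blast

lemma star_cases:
  assumes "a \<in> insert Cv (Xv ` {1..n})"
  obtains "a = Cv" | i where "i \<in> {1..n}" "a = Xv i"
  using assms by blast

lemma star_embed:
  assumes wf: "wf_graph G" and c: "c \<in> verts G" and lV: "\<forall>i\<in>{1..n}. l i \<in> verts G"
    and linj: "inj_on l {1..n}" and lc: "\<forall>i\<in>{1..n}. l i \<noteq> c"
    and cl: "\<forall>i\<in>{1..n}. adj G c (l i)" and ll: "\<forall>i\<in>{1..n}. \<forall>j\<in>{1..n}. \<not> adj G (l i) (l j)"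
  shows "contains_induced G (star_graph n)"
  unfolding contains_induced_def
proof (intro exI[of _ "\<lambda>p. case p of Cv \<Rightarrow> c | Xv i \<Rightarrow> l i | Yv i \<Rightarrow> c"] conjI)
  let ?f = "\<lambda>p. case p of Cv \<Rightarrow> c | Xv i \<Rightarrow> l i | Yv i \<Rightarrow> c"
  show "inj_on ?f (verts (star_graph n))"
    unfolding verts_star
  proof (rule inj_onI)
    fix a b assume a: "a \<in> insert Cv (Xv ` {1..n})" and b: "b \<in> insert Cv (Xv ` {1..n})" and e: "?f a = ?f b"
    show "a = b"
    proof (cases rule: star_cases[OF a])
      case 1
      then show ?thesis
      proof (cases rule: star_cases[OF b])
        case 1 then show ?thesis using \<open>a = Cv\<close> by simp
      next
        case (2 j)
        have "c = l j" using e \<open>a = Cv\<close> \<open>b = Xv j\<close> by simp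
        moreover have "l j \<noteq> c" using lc \<open>j \<in> {1..n}\<close> by blast
        ultimately show ?thesis by simp
      qed
    next
      case (2 i)
      then show ?thesis
      proof (cases rule: star_cases[OF b])
        case 1
        have "l i = c" using e \<open>a = Xv i\<close> \<open>b = Cv\<close> by simp
        moreover have "l i \<noteq> c" using lc \<open>i \<in> {1..n}\<close> by blast
        ultimately show ?thesis by simp
      next
        case (2 j)
        have "l i = l j" using e \<open>a = Xv i\<close> \<open>b = Xv j\<close> by simp
        then have "i = j" by (rule inj_onD[OF linj _ \<open>i \<in> {1..n}\<close> \<open>j \<in> {1..n}\<close>])
        then show ?thesis using \<open>a = Xv i\<close> \<open>b = Xv j\<close> by simp
      qed
    qed
  qed
  show "?f ` verts (star_graph n) \<subseteq> verts G" unfolding verts_star using c lV by force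
  show "\<forall>u\<in>verts (star_graph n). \<forall>v\<in>verts (star_graph n). adj G (?f u) (?f v) = adj (star_graph n) u v"
    unfolding verts_star
  proof (intro ballI)
    fix a b assume a: "a \<in> insert Cv (Xv ` {1..n})" and b: "b \<in> insert Cv (Xv ` {1..n})"
    show "adj G (?f a) (?f b) = adj (star_graph n) a b"
    proof (cases rule: star_cases[OF a])
      case 1
      then show ?thesis
      proof (cases rule: star_cases[OF b])
        case 1 then show ?thesis using \<open>a = Cv\<close> \<open>b = Cv\<close> adj_irrefl[OF wf, of c] adj_star(4)[of n] by simp
      next
        case (2 j)
        have "adj G c (l j)" using cl \<open>j \<in> {1..n}\<close> by blast
        then show ?thesis using \<open>a = Cv\<close> \<open>b = Xv j\<close> adj_star(1)[of n j] \<open>j \<in> {1..n}\<close> by simp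
      qed
    next
      case (2 i)
      then show ?thesis
      proof (cases rule: star_cases[OF b])
        case 1
        have "adj G c (l i)" using cl \<open>i \<in> {1..n}\<close> by blast
        then have "adj G (l i) c" by (subst adj_sym)
        then show ?thesis using \<open>a = Xv i\<close> \<open>b = Cv\<close> adj_star(2)[of n i] \<open>i \<in> {1..n}\<close> by simp
      next
        case (2 j)
        have "\<not> adj G (l i) (l j)" using ll \<open>i \<in> {1..n}\<close> \<open>j \<in> {1..n}\<close> by blast
        then show ?thesis using \<open>a = Xv i\<close> \<open>b = Xv j\<close> adj_star(3)[of n i j] by simp
      qed
    qed
  qed
qed

lemma XY_embed:
  assumes wf: "wf_graph G" and P: "verts P = XY n"
    and xV: "\<forall>i\<in>{1..n}. x i \<in> verts G" and yV: "\<forall>i\<in>{1..n}. y i \<in> verts G"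
    and xinj: "inj_on x {1..n}" and yinj: "inj_on y {1..n}" and xy: "\<forall>i\<in>{1..n}. \<forall>j\<in>{1..n}. x i \<noteq> y j"
    and a1: "\<forall>i\<in>{1..n}. \<forall>j\<in>{1..n}. adj G (x i) (x j) \<longleftrightarrow> adj P (Xv i) (Xv j)"
    and a2: "\<forall>i\<in>{1..n}. \<forall>j\<in>{1..n}. adj G (x i) (y j) \<longleftrightarrow> adj P (Xv i) (Yv j)"
    and a3: "\<forall>i\<in>{1..n}. \<forall>j\<in>{1..n}. adj G (y i) (x j) \<longleftrightarrow> adj P (Yv i) (Xv j)"
    and a4: "\<forall>i\<in>{1..n}. \<forall>j\<in>{1..n}. adj G (y i) (y j) \<longleftrightarrow> adj P (Yv i) (Yv j)"
  shows "contains_induced G P"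
  unfolding contains_induced_def
proof (intro exI[of _ "\<lambda>p. case p of Cv \<Rightarrow> x 1 | Xv i \<Rightarrow> x i | Yv i \<Rightarrow> y i"] conjI)
  let ?f = "\<lambda>p. case p of Cv \<Rightarrow> x 1 | Xv i \<Rightarrow> x i | Yv i \<Rightarrow> y i"
  show "inj_on ?f (verts P)"
    unfolding P
  proof (rule inj_onI)
    fix a b assume a: "a \<in> XY n" and b: "b \<in> XY n" and e: "?f a = ?f b"
    show "a = b"
    proof (cases rule: XY_cases[OF a])
      case (1 i)
      then show ?thesis
      proof (cases rule: XY_cases[OF b])
        case (1 j)
        have "x i = x j" using e \<open>a = Xv i\<close> \<open>b = Xv j\<close> by simp
        then have "i = j" by (rule inj_onD[OF xinj _ \<open>i \<in> {1..n}\<close> \<open>j \<in> {1..n}\<close>])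
        then show ?thesis using \<open>a = Xv i\<close> \<open>b = Xv j\<close> by simp
      next
        case (2 j)
        have "x i = y j" using e \<open>a = Xv i\<close> \<open>b = Yv j\<close> by simp
        moreover have "x i \<noteq> y j" using xy \<open>i \<in> {1..n}\<close> \<open>j \<in> {1..n}\<close> by blast
        ultimately show ?thesis by contradiction
      qed
    next
      case (2 i)
      then show ?thesis
      proof (cases rule: XY_cases[OF b])
        case (1 j)
        have "y i = x j" using e \<open>a = Yv i\<close> \<open>b = Xv j\<close> by simp
        moreover have "x j \<noteq> y i" using xy \<open>i \<in> {1..n}\<close> \<open>j \<in> {1..n}\<close> by blast
        ultimately show ?thesis by simp
      next
        case (2 j)
        have "y i = y j" using e \<open>a = Yv i\<close> \<open>b = Yv j\<close> by simp
        then have "i = j" by (rule inj_onD[OF yinj _ \<open>i \<in> {1..n}\<close> \<open>j \<in> {1..n}\<close>])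
        then show ?thesis using \<open>a = Yv i\<close> \<open>b = Yv j\<close> by simp
      qed
    qed
  qed
  show "?f ` verts P \<subseteq> verts G" unfolding P XY_def using xV yV by force
  show "\<forall>u\<in>verts P. \<forall>v\<in>verts P. adj G (?f u) (?f v) = adj P u v"
    unfolding P
  proof (intro ballI)
    fix a b assume a: "a \<in> XY n" and b: "b \<in> XY n"
    show "adj G (?f a) (?f b) = adj P a b"
    proof (cases rule: XY_cases[OF a])
      case (1 i)
      then show ?thesis
      proof (cases rule: XY_cases[OF b])
        case (1 j)
        have "adj G (x i) (x j) \<longleftrightarrow> adj P (Xv i) (Xv j)" using a1 \<open>i \<in> {1..n}\<close> \<open>j \<in> {1..n}\<close> by blast
        then show ?thesis using \<open>a = Xv i\<close> \<open>b = Xv j\<close> by simp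
      next
        case (2 j)
        have "adj G (x i) (y j) \<longleftrightarrow> adj P (Xv i) (Yv j)" using a2 \<open>i \<in> {1..n}\<close> \<open>j \<in> {1..n}\<close> by blast
        then show ?thesis using \<open>a = Xv i\<close> \<open>b = Yv j\<close> by simp
      qed
    next
      case (2 i)
      then show ?thesis
      proof (cases rule: XY_cases[OF b])
        case (1 j)
        have "adj G (y i) (x j) \<longleftrightarrow> adj P (Yv i) (Xv j)" using a3 \<open>i \<in> {1..n}\<close> \<open>j \<in> {1..n}\<close> by blast
        then show ?thesis using \<open>a = Yv i\<close> \<open>b = Xv j\<close> by simp
      next
        case (2 j)
        have "adj G (y i) (y j) \<longleftrightarrow> adj P (Yv i) (Yv j)" using a4 \<open>i \<in> {1..n}\<close> \<open>j \<in> {1..n}\<close> by blast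
        then show ?thesis using \<open>a = Yv i\<close> \<open>b = Yv j\<close> by simp
      qed
    qed
  qed
qed


abbreviation has_pattern :: "'a graph \<Rightarrow> nat \<Rightarrow> bool" where
  "has_pattern G n \<equiv> contains_induced G (star_graph n) \<or> contains_induced G (matching_KI n) \<or>
     contains_induced G (matching_KK n) \<or> contains_induced G (antimatching_KK n) \<or>
     contains_induced G (halfgraph_KK n)"

lemma structure_pattern:
  fixes x y :: "nat \<Rightarrow> 'a"
  assumes wf: "wf_graph G"
    and xV: "\<forall>t\<in>{1..n+1}. x t \<in> verts G" and yV: "\<forall>t\<in>{1..n+1}. y t \<in> verts G"
    and xinj: "inj_on x {1..n+1}"
    and xy: "\<forall>s\<in>{1..n+1}. \<forall>t\<in>{1..n+1}. x s \<noteq> y t"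
    and xx: "\<forall>s\<in>{1..n+1}. \<forall>t\<in>{1..n+1}. adj G (x s) (x t) \<longleftrightarrow> s \<noteq> t"
    and yy: "\<forall>s\<in>{1..n+1}. \<forall>t\<in>{1..n+1}. s < t \<longrightarrow> (adj G (y s) (y t) \<longleftrightarrow> Sy)"
    and xya: "\<forall>s\<in>{1..n+1}. \<forall>t\<in>{1..n+1}. adj G (x s) (y t) \<longleftrightarrow> (if s = t then Re else if t < s then Pg else Ql)"
    and Re: "Re = (if Pg = Ql then \<not> Pg else True)"
  shows "has_pattern G n"
proof -
  let ?I = "{1..n+1}"
  have yyf: "adj G (y s) (y t) \<longleftrightarrow> s \<noteq> t \<and> Sy" if st: "s \<in> ?I" "t \<in> ?I" for s t
  proof (cases s t rule: linorder_cases)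
    case less then show ?thesis using yy st by auto
  next
    case equal then show ?thesis using adj_irrefl[OF wf] by simp
  next
    case greater
    have "adj G (y t) (y s) \<longleftrightarrow> Sy" using yy st greater by auto
    then show ?thesis using greater adj_sym[of G "y s" "y t"] by simp
  qed
  have xyf: "adj G (x s) (y t) \<longleftrightarrow> (if s = t then Re else if t < s then Pg else Ql)"
    if st: "s \<in> ?I" "t \<in> ?I" for s t using xya st by blast
  have yxf: "adj G (y t) (x s) \<longleftrightarrow> (if s = t then Re else if t < s then Pg else Ql)"
    if st: "s \<in> ?I" "t \<in> ?I" for s t using xyf[OF st] adj_sym[of G "y t" "x s"] by simp
  have xxf: "adj G (x s) (x t) \<longleftrightarrow> s \<noteq> t" if st: "s \<in> ?I" "t \<in> ?I" for s t using xx st by blast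
  have yinj_aux: "y s \<noteq> y t" if st: "s \<in> ?I" "t \<in> ?I" "s < t" for s t
  proof
    assume e: "y s = y t"
    have 1: "adj G (x s) (y s) \<longleftrightarrow> Re" using xyf[OF st(1) st(1)] by simp
    have 2: "adj G (x s) (y t) \<longleftrightarrow> Ql" using xyf[OF st(1) st(2)] st(3) by simp
    have 3: "adj G (x t) (y t) \<longleftrightarrow> Re" using xyf[OF st(2) st(2)] by simp
    have 4: "adj G (x t) (y s) \<longleftrightarrow> Pg" using xyf[OF st(2) st(1)] st(3) by simp
    have "Re = Ql" using 1 2 e by simp
    moreover have "Re = Pg" using 3 4 e by simp
    ultimately show False using Re by (cases Pg; cases Ql) auto
  qed
  have yinj: "inj_on y ?I"
  proof (rule inj_onI)
    fix s t assume st: "s \<in> ?I" "t \<in> ?I" "y s = y t"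
    show "s = t"
    proof (rule ccontr)
      assume "s \<noteq> t"
      then have "s < t \<or> t < s" by arith
      then show False using yinj_aux st by metis
    qed
  qed
  have sub: "{1..n} \<subseteq> ?I" by auto
  have xV': "\<forall>t\<in>{1..n}. x t \<in> verts G" using xV sub by blast
  have yV': "\<forall>t\<in>{1..n}. y t \<in> verts G" using yV sub by blast
  have xinj': "inj_on x {1..n}" by (rule inj_on_subset[OF xinj sub])
  have yinj': "inj_on y {1..n}" by (rule inj_on_subset[OF yinj sub])
  have xy': "\<forall>i\<in>{1..n}. \<forall>j\<in>{1..n}. x i \<noteq> y j" using xy sub by blast
  have yx': "\<forall>i\<in>{1..n}. \<forall>j\<in>{1..n}. y i \<noteq> x j" using xy sub by (metis subsetD)
  have sI: "i \<in> ?I" if "i \<in> {1..n}" for i using that by auto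
  show ?thesis
  proof (cases Sy)
    case False
    show ?thesis
    proof (cases Ql)
      case True
      have c: "x 1 \<in> verts G" using xV by auto
      have "contains_induced G (star_graph n)"
      proof (rule star_embed[OF wf c])
        show "\<forall>i\<in>{1..n}. y (i+1) \<in> verts G" using yV by auto
        show "inj_on (\<lambda>i. y (i+1)) {1..n}"
        proof (rule inj_onI)
          fix i j assume ij: "i \<in> {1..n}" "j \<in> {1..n}" "y (i+1) = y (j+1)"
          have "i + 1 = j + 1" by (rule inj_onD[OF yinj ij(3)]) (use ij in auto)
          then show "i = j" by simp
        qed
        show "\<forall>i\<in>{1..n}. y (i+1) \<noteq> x 1" using xy by force
        show "\<forall>i\<in>{1..n}. adj G (x 1) (y (i+1))"
        proof
          fix i assume i: "i \<in> {1..n}"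
          have "adj G (x 1) (y (i+1)) \<longleftrightarrow> Ql" using xyf[of 1 "i+1"] i by auto
          then show "adj G (x 1) (y (i+1))" using True by simp
        qed
        show "\<forall>i\<in>{1..n}. \<forall>j\<in>{1..n}. \<not> adj G (y (i+1)) (y (j+1))"
        proof (intro ballI)
          fix i j assume ij: "i \<in> {1..n}" "j \<in> {1..n}"
          show "\<not> adj G (y (i+1)) (y (j+1))" using yyf[of "i+1" "j+1"] ij \<open>\<not> Sy\<close> by auto
        qed
      qed
      then show ?thesis by blast
    next
      case nQ: False
      show ?thesis
      proof (cases Pg)
        case True
        have c: "x (n+1) \<in> verts G" using xV by auto
        have "contains_induced G (star_graph n)"
        proof (rule star_embed[OF wf c])
          show "\<forall>i\<in>{1..n}. y i \<in> verts G" by (rule yV')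
          show "inj_on y {1..n}" by (rule yinj')
          show "\<forall>i\<in>{1..n}. y i \<noteq> x (n+1)" using xy by force
          show "\<forall>i\<in>{1..n}. adj G (x (n+1)) (y i)"
          proof
            fix i assume i: "i \<in> {1..n}"
            have "adj G (x (n+1)) (y i) \<longleftrightarrow> Pg" using xyf[of "n+1" i] i by auto
            then show "adj G (x (n+1)) (y i)" using True by simp
          qed
          show "\<forall>i\<in>{1..n}. \<forall>j\<in>{1..n}. \<not> adj G (y i) (y j)"
          proof (intro ballI)
            fix i j assume ij: "i \<in> {1..n}" "j \<in> {1..n}"
            show "\<not> adj G (y i) (y j)" using yyf[OF sI[OF ij(1)] sI[OF ij(2)]] \<open>\<not> Sy\<close> by auto
          qed
        qed
        then show ?thesis by blast
      next
        case nP: False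
        have ReT: "Re" using Re nP nQ by simp
        have "contains_induced G (matching_KI n)"
        proof (rule XY_embed[OF wf verts_MKI xV' yV' xinj' yinj' xy'])
          show "\<forall>i\<in>{1..n}. \<forall>j\<in>{1..n}. adj G (x i) (x j) = adj (matching_KI n) (Xv i) (Xv j)"
            using xxf sI adj_MKI(1) by auto
          show "\<forall>i\<in>{1..n}. \<forall>j\<in>{1..n}. adj G (x i) (y j) = adj (matching_KI n) (Xv i) (Yv j)"
            using xyf sI adj_MKI(2) ReT nP nQ by auto
          show "\<forall>i\<in>{1..n}. \<forall>j\<in>{1..n}. adj G (y i) (x j) = adj (matching_KI n) (Yv i) (Xv j)"
            using yxf sI adj_MKI(3) ReT nP nQ by auto
          show "\<forall>i\<in>{1..n}. \<forall>j\<in>{1..n}. adj G (y i) (y j) = adj (matching_KI n) (Yv i) (Yv j)"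
            using yyf sI adj_MKI(4) \<open>\<not> Sy\<close> by auto
        qed
        then show ?thesis by blast
      qed
    qed
  next
    case S: True
    show ?thesis
    proof (cases Pg; cases Ql)
      assume P: Pg and Q: Ql
      have ReF: "\<not> Re" using Re P Q by simp
      have "contains_induced G (antimatching_KK n)"
      proof (rule XY_embed[OF wf verts_AKK xV' yV' xinj' yinj' xy'])
        show "\<forall>i\<in>{1..n}. \<forall>j\<in>{1..n}. adj G (x i) (x j) = adj (antimatching_KK n) (Xv i) (Xv j)"
          using xxf sI adj_AKK(1) by auto
        show "\<forall>i\<in>{1..n}. \<forall>j\<in>{1..n}. adj G (x i) (y j) = adj (antimatching_KK n) (Xv i) (Yv j)"
          using xyf sI adj_AKK(2) ReF P Q by auto
        show "\<forall>i\<in>{1..n}. \<forall>j\<in>{1..n}. adj G (y i) (x j) = adj (antimatching_KK n) (Yv i) (Xv j)"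
          using yxf sI adj_AKK(3) ReF P Q by auto
        show "\<forall>i\<in>{1..n}. \<forall>j\<in>{1..n}. adj G (y i) (y j) = adj (antimatching_KK n) (Yv i) (Yv j)"
          using yyf sI adj_AKK(4) S by auto
      qed
      then show ?thesis by blast
    next
      assume P: Pg and Q: "\<not> Ql"
      have ReT: "Re" using Re P Q by simp
      have "contains_induced G (halfgraph_KK n)"
      proof (rule XY_embed[OF wf verts_HKK yV' xV' yinj' xinj' yx'])
        show "\<forall>i\<in>{1..n}. \<forall>j\<in>{1..n}. adj G (y i) (y j) = adj (halfgraph_KK n) (Xv i) (Xv j)"
          using yyf sI adj_HKK(1) S by auto
        show "\<forall>i\<in>{1..n}. \<forall>j\<in>{1..n}. adj G (y i) (x j) = adj (halfgraph_KK n) (Xv i) (Yv j)"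
          using yxf sI adj_HKK(2) ReT P Q by auto
        show "\<forall>i\<in>{1..n}. \<forall>j\<in>{1..n}. adj G (x i) (y j) = adj (halfgraph_KK n) (Yv i) (Xv j)"
          using xyf sI adj_HKK(3) ReT P Q by auto
        show "\<forall>i\<in>{1..n}. \<forall>j\<in>{1..n}. adj G (x i) (x j) = adj (halfgraph_KK n) (Yv i) (Yv j)"
          using xxf sI adj_HKK(4) by auto
      qed
      then show ?thesis by blast
    next
      assume P: "\<not> Pg" and Q: Ql
      have ReT: "Re" using Re P Q by simp
      have "contains_induced G (halfgraph_KK n)"
      proof (rule XY_embed[OF wf verts_HKK xV' yV' xinj' yinj' xy'])
        show "\<forall>i\<in>{1..n}. \<forall>j\<in>{1..n}. adj G (x i) (x j) = adj (halfgraph_KK n) (Xv i) (Xv j)"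
          using xxf sI adj_HKK(1) by auto
        show "\<forall>i\<in>{1..n}. \<forall>j\<in>{1..n}. adj G (x i) (y j) = adj (halfgraph_KK n) (Xv i) (Yv j)"
          using xyf sI adj_HKK(2) ReT P Q by auto
        show "\<forall>i\<in>{1..n}. \<forall>j\<in>{1..n}. adj G (y i) (x j) = adj (halfgraph_KK n) (Yv i) (Xv j)"
          using yxf sI adj_HKK(3) ReT P Q by auto
        show "\<forall>i\<in>{1..n}. \<forall>j\<in>{1..n}. adj G (y i) (y j) = adj (halfgraph_KK n) (Yv i) (Yv j)"
          using yyf sI adj_HKK(4) S by auto
      qed
      then show ?thesis by blast
    next
      assume P: "\<not> Pg" and Q: "\<not> Ql"
      have ReT: "Re" using Re P Q by simp
      have "contains_induced G (matching_KK n)"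
      proof (rule XY_embed[OF wf verts_MKK xV' yV' xinj' yinj' xy'])
        show "\<forall>i\<in>{1..n}. \<forall>j\<in>{1..n}. adj G (x i) (x j) = adj (matching_KK n) (Xv i) (Xv j)"
          using xxf sI adj_MKK(1) by auto
        show "\<forall>i\<in>{1..n}. \<forall>j\<in>{1..n}. adj G (x i) (y j) = adj (matching_KK n) (Xv i) (Yv j)"
          using xyf sI adj_MKK(2) ReT P Q by auto
        show "\<forall>i\<in>{1..n}. \<forall>j\<in>{1..n}. adj G (y i) (x j) = adj (matching_KK n) (Yv i) (Xv j)"
          using yxf sI adj_MKK(3) ReT P Q by auto
        show "\<forall>i\<in>{1..n}. \<forall>j\<in>{1..n}. adj G (y i) (y j) = adj (matching_KK n) (Yv i) (Yv j)"
          using yyf sI adj_MKK(4) S by auto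
      qed
      then show ?thesis by blast
    qed
  qed
qed

definition enc :: "bool \<Rightarrow> bool \<Rightarrow> bool \<Rightarrow> bool \<Rightarrow> nat" where
  "enc a b c d = (if a then 1 else 0) + (if b then 2 else 0) + (if c then 4 else 0) + (if d then 8 else 0)"

lemma enc_lt: "enc a b c d < 16"
  unfolding enc_def by (cases a; cases b; cases c; cases d) auto

lemma enc_bits:
  "a \<longleftrightarrow> odd (enc a b c d)" "b \<longleftrightarrow> odd (enc a b c d div 2)"
  "c \<longleftrightarrow> odd (enc a b c d div 4)" "d \<longleftrightarrow> odd (enc a b c d div 8)"
  unfolding enc_def by (cases a; cases b; cases c; cases d; simp)+

lemma enc_inj:
  assumes e: "enc a b c d = enc a' b' c' d'"
  shows "a = a' \<and> b = b' \<and> c = c' \<and> d = d'"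
proof (intro conjI)
  show "a = a'" using enc_bits(1)[of a b c d] enc_bits(1)[of a' b' c' d'] e by simp
  show "b = b'" using enc_bits(2)[of b a c d] enc_bits(2)[of b' a' c' d'] e by simp
  show "c = c'" using enc_bits(3)[of c a b d] enc_bits(3)[of c' a' b' d'] e by simp
  show "d = d'" using enc_bits(4)[of d a b c] enc_bits(4)[of d' a' b' c'] e by simp
qed

lemma sorted4:
  fixes a b c d :: nat
  assumes "a < b" "b < c" "c < d"
  shows "sorted_list_of_set {a, b, c, d} = [a, b, c, d]"
proof -
  have fin: "finite {a, b, c, d}" by simp
  have s: "sorted_wrt (<) [a, b, c, d]" using assms by simp
  have c4: "card {a, b, c, d} = 4" using assms by simp
  have "sorted_wrt (<) [a, b, c, d] \<and> set [a, b, c, d] = {a, b, c, d} \<and> length [a,b,c,d] = card {a, b, c, d}"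
    using s c4 by simp
  then show ?thesis using sorted_list_of_set_unique[OF fin, of "[a,b,c,d]"] by blast
qed

lemma clique_structure:
  fixes G :: "'a graph" and C :: "'a set" and M n :: nat
  assumes wf: "wf_graph G" and CV: "C \<subseteq> verts G" and fin: "finite C" and cM: "card C = M"
    and cl: "\<forall>a\<in>C. \<forall>b\<in>C. a \<noteq> b \<longrightarrow> adj G a b"
    and dn: "\<forall>a\<in>C. \<forall>b\<in>C. a \<noteq> b \<longrightarrow> closed_nbhd G a \<noteq> closed_nbhd G b"
    and ram: "partn_lst {..<M} (replicate 16 (2*n+6)) 4"
  shows "has_pattern G n"
proof -
  obtain u where u: "bij_betw u {..<M} C"
    using ex_bij_betw_nat_finite[OF fin] cM by (auto simp: atLeast0LessThan)
  have uC: "u a \<in> C" if "a < M" for a using bij_betwE[OF u] that by blast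
  have uV: "u a \<in> verts G" if "a < M" for a using uC[OF that] CV by blast
  have uinj: "a = b" if "u a = u b" "a < M" "b < M" for a b
    using bij_betw_imp_inj_on[OF u] that by (auto dest: inj_onD)
  have wex: "\<exists>z. z \<in> verts G \<and> z \<notin> C \<and> adj G (u a) z \<noteq> adj G (u b) z"
    if ab: "a < M" "b < M" "a \<noteq> b" for a b
  proof -
    have uab: "u a \<noteq> u b" using uinj ab by blast
    have ne: "closed_nbhd G (u a) \<noteq> closed_nbhd G (u b)" using dn uC[OF ab(1)] uC[OF ab(2)] uab by blast
    then obtain z where z: "(z \<in> closed_nbhd G (u a)) \<noteq> (z \<in> closed_nbhd G (u b))" by blast
    have zV: "z \<in> verts G" using z closed_nbhd_sub[OF uV[OF ab(1)]] closed_nbhd_sub[OF uV[OF ab(2)]] by blast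
    have inN: "c \<in> closed_nbhd G (u a')" if "c \<in> C" "a' < M" for c a'
    proof (cases "c = u a'")
      case True then show ?thesis by (simp add: closed_nbhd_def)
    next
      case False
      then have "u a' \<noteq> c" by simp
      then have "adj G (u a') c" using cl uC[OF that(2)] that(1) by blast
      then show ?thesis using in_closed_nbhd[OF wf] by blast
    qed
    have zC: "z \<notin> C"
    proof
      assume "z \<in> C"
      then show False using inN[OF _ ab(1)] inN[OF _ ab(2)] z by blast
    qed
    have za: "z \<noteq> u a" using zC uC[OF ab(1)] by blast
    have zb: "z \<noteq> u b" using zC uC[OF ab(2)] by blast
    have "adj G (u a) z \<noteq> adj G (u b) z" using z za zb in_closed_nbhd[OF wf] by blast
    then show ?thesis using zV zC by blast
  qed
  define w where "w a b = (SOME z. z \<in> verts G \<and> z \<notin> C \<and> adj G (u a) z \<noteq> adj G (u b) z)" for a b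
  have wp: "w a b \<in> verts G \<and> w a b \<notin> C \<and> adj G (u a) (w a b) \<noteq> adj G (u b) (w a b)"
    if "a < M" "b < M" "a \<noteq> b" for a b
    unfolding w_def by (rule someI_ex[OF wex[OF that]])
  define Rb where "Rb a b = adj G (u a) (w a b)" for a b
  define Pb where "Pb a b c = adj G (u c) (w a b)" for a b c
  define Qb where "Qb a b c = adj G (u a) (w b c)" for a b c
  define Sb where "Sb a b c d = adj G (w a b) (w c d)" for a b c d
  define col where "col S = (let l = sorted_list_of_set S in
      enc (Rb (l!0) (l!1)) (Pb (l!0) (l!1) (l!2)) (Qb (l!0) (l!1) (l!2)) (Sb (l!0) (l!1) (l!2) (l!3)))" for S
  have colF: "col \<in> nsets {..<M} 4 \<rightarrow> {..<length (replicate 16 (2*n+6))}"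
    using enc_lt by (simp add: col_def Let_def)
  obtain i H where i: "i < length (replicate 16 (2*n+6))"
    and H: "H \<in> nsets {..<M} (replicate 16 (2*n+6) ! i)" and hom: "col ` nsets H 4 \<subseteq> {i}"
    using partn_lstE[OF ram colF refl] by blast
  define L where "L = 2*n+6"
  have H': "H \<subseteq> {..<M}" "finite H" "card H = L" using H i unfolding nsets_def L_def by auto
  define hs where "hs = sorted_list_of_set H"
  define h where "h k = hs ! k" for k
  have len: "length hs = L" unfolding hs_def using H' by simp
  have ss: "sorted_wrt (<) hs" unfolding hs_def by simp
  have hmono: "h p < h q" if "p < q" "q < L" for p q
    unfolding h_def using sorted_wrt_nth_less[OF ss that(1)] that len by simp
  have hH: "h p \<in> H" if "p < L" for p
  proof -
    have "hs ! p \<in> set hs" using that len by simp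
    then show ?thesis unfolding h_def hs_def using H' by simp
  qed
  have hM: "h p < M" if "p < L" for p using hH[OF that] H' by blast
  have hinj: "p = q" if "h p = h q" "p < L" "q < L" for p q
  proof (rule ccontr)
    assume "p \<noteq> q"
    then have "p < q \<or> q < p" by arith
    then show False using hmono[of p q] hmono[of q p] that by auto
  qed
  have quad: "enc (Rb (h p) (h q)) (Pb (h p) (h q) (h r)) (Qb (h p) (h q) (h r)) (Sb (h p) (h q) (h r) (h s)) = i"
    if o: "p < q" "q < r" "r < s" "s < L" for p q r s
  proof -
    have m: "h p < h q" "h q < h r" "h r < h s" using hmono o by auto
    have c4: "card {h p, h q, h r, h s} = 4" using m by auto
    have sH: "{h p, h q, h r, h s} \<subseteq> H" using hH[of p] hH[of q] hH[of r] hH[of s] o by auto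
    have "{h p, h q, h r, h s} \<in> nsets H 4"
      unfolding nsets_def using c4 sH by auto
    then have "col {h p, h q, h r, h s} = i" using hom by blast
    moreover have "sorted_list_of_set {h p, h q, h r, h s} = [h p, h q, h r, h s]"
      by (rule sorted4) (use m in auto)
    ultimately show ?thesis by (simp add: col_def)
  qed
  define R0 where "R0 = Rb (h 0) (h 1)"
  define P0 where "P0 = Pb (h 0) (h 1) (h 2)"
  define Q0 where "Q0 = Qb (h 0) (h 1) (h 2)"
  define S0 where "S0 = Sb (h 0) (h 1) (h 2) (h 3)"
  have q0: "enc R0 P0 Q0 S0 = i" unfolding R0_def P0_def Q0_def S0_def by (rule quad) (auto simp: L_def)
  have bits: "Rb (h p) (h q) = R0 \<and> Pb (h p) (h q) (h r) = P0 \<and> Qb (h p) (h q) (h r) = Q0 \<and> Sb (h p) (h q) (h r) (h s) = S0"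
    if "p < q" "q < r" "r < s" "s < L" for p q r s
    using enc_inj[OF trans[OF quad[OF that] q0[symmetric]]] .
  have Rc: "Rb (h p) (h q) = R0" if "p < q" "q + 2 < L" for p q
    using bits[of p q "q+1" "q+2"] that by auto
  have Pc: "Pb (h p) (h q) (h r) = P0" if "p < q" "q < r" "r + 1 < L" for p q r
    using bits[of p q r "r+1"] that by auto
  have Qc: "Qb (h p) (h q) (h r) = Q0" if "p < q" "q < r" "r + 1 < L" for p q r
    using bits[of p q r "r+1"] that by auto
  have Sc: "Sb (h p) (h q) (h r) (h s) = S0" if "p < q" "q < r" "r < s" "s < L" for p q r s
    using bits[OF that] by auto
  define e :: nat where "e = (if P0 = Q0 then (if R0 \<noteq> P0 then 0 else 1) else (if R0 then 0 else 1))"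
  define Re where "Re = (if P0 = Q0 then \<not> P0 else True)"
  have e01: "e \<le> 1" unfolding e_def by auto
  have eRe: "(if e = 0 then R0 else \<not> R0) = Re" unfolding e_def Re_def by auto
  define x where "x t = u (h (2*t+e))" for t
  define y where "y t = w (h (2*t)) (h (2*t+1))" for t
  let ?I = "{1..n+1}"
  have rng: "2*t+e < L" "2*t+1 < L" "2*t < L" "2*t+3 < L" "2*t+e+1 < L" "2*t+2 < L" if "t \<in> ?I" for t
    using that e01 by (auto simp: L_def)
  have hne: "h (2*t) \<noteq> h (2*t+1)" if "t \<in> ?I" for t using hmono[of "2*t" "2*t+1"] rng[OF that] by simp
  have wpt: "y t \<in> verts G \<and> y t \<notin> C \<and> adj G (u (h (2*t))) (y t) \<noteq> adj G (u (h (2*t+1))) (y t)"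
    if t: "t \<in> ?I" for t
  proof -
    have a: "h (2*t) < M" "h (2*t+1) < M" using hM rng[OF t] by auto
    show ?thesis unfolding y_def by (rule wp[OF a(1) a(2) hne[OF t]])
  qed
  have xC: "x t \<in> C" if "t \<in> ?I" for t unfolding x_def by (rule uC[OF hM[OF rng(1)[OF that]]])
  have xeq: "s = t" if st: "s \<in> ?I" "t \<in> ?I" "x s = x t" for s t
  proof -
    have "u (h (2*s+e)) = u (h (2*t+e))" using st(3) unfolding x_def .
    then have "h (2*s+e) = h (2*t+e)" by (rule uinj[OF _ hM[OF rng(1)[OF st(1)]] hM[OF rng(1)[OF st(2)]]])
    then have "2*s+e = 2*t+e" by (rule hinj[OF _ rng(1)[OF st(1)] rng(1)[OF st(2)]])
    then show "s = t" by simp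
  qed
  show ?thesis
  proof (rule structure_pattern[OF wf, where x=x and y=y and n=n and Sy=S0 and Re=Re and Pg=P0 and Ql=Q0])
    show "\<forall>t\<in>?I. x t \<in> verts G"
    proof
      fix t assume t: "t \<in> ?I"
      show "x t \<in> verts G" using CV xC[OF t] by (rule subsetD)
    qed
    show "\<forall>t\<in>?I. y t \<in> verts G"
    proof
      fix t assume t: "t \<in> ?I"
      show "y t \<in> verts G" using wpt[OF t] by (rule conjunct1)
    qed
    show "inj_on x ?I"
    proof (rule inj_onI)
      fix s t assume st: "s \<in> ?I" "t \<in> ?I" "x s = x t"
      show "s = t" by (rule xeq[OF st])
    qed
    show "\<forall>s\<in>?I. \<forall>t\<in>?I. x s \<noteq> y t"
    proof (intro ballI)
      fix s t assume st: "s \<in> ?I" "t \<in> ?I"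
      have "y t \<notin> C" using wpt[OF st(2)] by simp
      then show "x s \<noteq> y t" using xC[OF st(1)] by metis
    qed
    show "\<forall>s\<in>?I. \<forall>t\<in>?I. adj G (x s) (x t) \<longleftrightarrow> s \<noteq> t"
    proof (intro ballI)
      fix s t assume st: "s \<in> ?I" "t \<in> ?I"
      show "adj G (x s) (x t) \<longleftrightarrow> s \<noteq> t"
      proof (cases "s = t")
        case True then show ?thesis using adj_irrefl[OF wf] by simp
      next
        case False
        have "x s \<noteq> x t"
        proof
          assume "x s = x t"
          then have "s = t" by (rule xeq[OF st])
          then show False using False by simp
        qed
        then show ?thesis using cl xC st False by blast
      qed
    qed
    show "\<forall>s\<in>?I. \<forall>t\<in>?I. s < t \<longrightarrow> (adj G (y s) (y t) \<longleftrightarrow> S0)"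
    proof (intro ballI impI)
      fix s t assume st: "s \<in> ?I" "t \<in> ?I" "s < t"
      have "Sb (h (2*s)) (h (2*s+1)) (h (2*t)) (h (2*t+1)) = S0"
        by (rule Sc) (use st(3) rng[OF st(1)] rng[OF st(2)] in auto)
      then show "adj G (y s) (y t) \<longleftrightarrow> S0" unfolding Sb_def y_def .
    qed
    show "\<forall>s\<in>?I. \<forall>t\<in>?I. adj G (x s) (y t) \<longleftrightarrow> (if s = t then Re else if t < s then P0 else Q0)"
    proof (intro ballI)
      fix s t assume st: "s \<in> ?I" "t \<in> ?I"
      show "adj G (x s) (y t) \<longleftrightarrow> (if s = t then Re else if t < s then P0 else Q0)"
      proof (cases s t rule: linorder_cases)
        case equal
        have r: "Rb (h (2*t)) (h (2*t+1)) = R0" by (rule Rc) (use rng[OF st(2)] in auto)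
        have "adj G (x t) (y t) \<longleftrightarrow> (if e = 0 then R0 else \<not> R0)"
        proof (cases "e = 0")
          case True then show ?thesis using r unfolding x_def y_def Rb_def by simp
        next
          case False
          then have e1: "e = 1" using e01 by simp
          have "adj G (u (h (2*t))) (y t) \<noteq> adj G (u (h (2*t+1))) (y t)" using wpt[OF st(2)] by blast
          then show ?thesis using r e1 unfolding x_def y_def Rb_def by (cases R0) auto
        qed
        then show ?thesis using equal eRe by simp
      next
        case greater
        have "Pb (h (2*t)) (h (2*t+1)) (h (2*s+e)) = P0"
          by (rule Pc) (use greater rng[OF st(1)] in auto)
        then show ?thesis using greater unfolding Pb_def x_def y_def by simp
      next
        case less
        have "Qb (h (2*s+e)) (h (2*t)) (h (2*t+1)) = Q0"
          by (rule Qc) (use less e01 rng[OF st(2)] in auto)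
        then show ?thesis using less unfolding Qb_def x_def y_def by simp
      qed
    qed
    show "Re = (if P0 = Q0 then \<not> P0 else True)" by (rule Re_def)
  qed
qed

lemma core:
  fixes n :: nat
  shows "\<exists>N. \<forall>(G::'a graph) v. wf_graph G \<longrightarrow> v \<in> verts G \<longrightarrow>
           N \<le> card (twin_class G ` closed_nbhd G v) \<longrightarrow> has_pattern G n"
proof -
  obtain M :: nat where M: "partn_lst {..<M} (replicate 16 (2*n+6)) 4" using ramsey_full[of "replicate 16 (2*n+6)" 4] by blast
  obtain r where r: "\<forall>(V::'a set) (E::'a set set). finite V \<and> card V \<ge> r \<longrightarrow>
      (\<exists>R \<subseteq> V. card R = M \<and> Ramsey.clique R E \<or> card R = n+1 \<and> Ramsey.indep R E)"
    using ramsey2[of M "n+1"] by blast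
  show ?thesis
  proof (intro exI allI impI)
    fix G :: "'a graph" and v
    assume wf: "wf_graph G" and v: "v \<in> verts G" and big: "r \<le> card (twin_class G ` closed_nbhd G v)"
    let ?N = "closed_nbhd G v"
    let ?T = "twin_class G ` ?N"
    define g where "g B = (SOME x. x \<in> ?N \<and> twin_class G x = B)" for B
    have g: "g B \<in> ?N \<and> twin_class G (g B) = B" if "B \<in> ?T" for B
    proof -
      have "\<exists>x. x \<in> ?N \<and> twin_class G x = B" using that by blast
      then show ?thesis unfolding g_def by (rule someI_ex)
    qed
    have ginj: "inj_on g ?T"
    proof (rule inj_onI)
      fix A B assume AB: "A \<in> ?T" "B \<in> ?T" "g A = g B"
      have "A = twin_class G (g A)" using g[OF AB(1)] by simp
      also have "\<dots> = twin_class G (g B)" using AB(3) by simp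
      also have "\<dots> = B" using g[OF AB(2)] by simp
      finally show "A = B" .
    qed
    define R0 where "R0 = g ` ?T"
    have finT: "finite ?T" using finite_nbhd[OF wf v] by simp
    have finR0: "finite R0" unfolding R0_def using finT by simp
    have cardR0: "card R0 = card ?T" unfolding R0_def using ginj by (simp add: card_image)
    have R0N: "R0 \<subseteq> ?N" unfolding R0_def using g by blast
    have NV: "?N \<subseteq> verts G" by (rule closed_nbhd_sub[OF v])
    have dist: "closed_nbhd G a \<noteq> closed_nbhd G b" if ab: "a \<in> R0" "b \<in> R0" "a \<noteq> b" for a b
    proof
      assume e: "closed_nbhd G a = closed_nbhd G b"
      obtain A where A: "A \<in> ?T" "a = g A" using ab(1) unfolding R0_def by blast
      obtain B where B: "B \<in> ?T" "b = g B" using ab(2) unfolding R0_def by blast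
      have av: "a \<in> verts G" "b \<in> verts G" using ab R0N NV by auto
      have "twin_class G a = twin_class G b" using twin_class_eq[OF av] e by simp
      then have "A = B" using g[OF A(1)] g[OF B(1)] A(2) B(2) by simp
      then show False using A B ab(3) by simp
    qed
    have fr: "finite R0 \<and> card R0 \<ge> r" using finR0 cardR0 big by simp
    obtain R where R: "R \<subseteq> R0" and RR: "card R = M \<and> Ramsey.clique R (edges G) \<or> card R = n+1 \<and> Ramsey.indep R (edges G)"
      using r[rule_format, OF fr] by blast
    have finR: "finite R" using R finR0 by (rule finite_subset)
    have RV: "R \<subseteq> verts G" using R R0N NV by blast
    show "has_pattern G n"
    proof (cases "card R = M \<and> Ramsey.clique R (edges G)")
      case True
      have cl: "\<forall>a\<in>R. \<forall>b\<in>R. a \<noteq> b \<longrightarrow> adj G a b"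
        using True unfolding Ramsey.clique_def adj_def by blast
      have dn: "\<forall>a\<in>R. \<forall>b\<in>R. a \<noteq> b \<longrightarrow> closed_nbhd G a \<noteq> closed_nbhd G b"
      proof (intro ballI impI)
        fix a b assume "a \<in> R" "b \<in> R" "a \<noteq> b"
        then show "closed_nbhd G a \<noteq> closed_nbhd G b" using dist R by (meson subsetD)
      qed
      show ?thesis by (rule clique_structure[OF wf RV finR _ cl dn M]) (use True in simp)
    next
      case False
      then have ind: "card R = n+1" "Ramsey.indep R (edges G)" using RR by auto
      have nadj: "\<not> adj G a b" if "a \<in> R" "b \<in> R" for a b
      proof (cases "a = b")
        case True then show ?thesis using adj_irrefl[OF wf] by simp
      next
        case False then show ?thesis using ind(2) that unfolding Ramsey.indep_def adj_def by blast
      qed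
      let ?I = "R - {v}"
      have "card R \<le> card ?I + 1"
        using finR by (cases "v \<in> R") (auto simp: card_Diff_singleton)
      then have "n \<le> card ?I" using ind(1) by simp
      then obtain I' where I': "I' \<subseteq> ?I" "card I' = n" "finite I'" by (rule obtain_subset_with_card_n)
      obtain l where l: "bij_betw l {1..card I'} I'" using ex_bij_betw_nat_finite_1[OF I'(3)] by blast
      have lI: "l i \<in> I'" if "i \<in> {1..n}" for i using bij_betwE[OF l] that I'(2) by blast
      have lR: "l i \<in> R" "l i \<noteq> v" if "i \<in> {1..n}" for i using lI[OF that] I'(1) by auto
      have "contains_induced G (star_graph n)"
      proof (rule star_embed[OF wf v])
        show "\<forall>i\<in>{1..n}. l i \<in> verts G" using lR(1) RV by blast
        show "inj_on l {1..n}" using bij_betw_imp_inj_on[OF l] I'(2) by simp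
        show "\<forall>i\<in>{1..n}. l i \<noteq> v" using lR(2) by blast
        show "\<forall>i\<in>{1..n}. adj G v (l i)"
        proof
          fix i assume i: "i \<in> {1..n}"
          have "l i \<in> ?N" using lR(1)[OF i] R R0N by blast
          then show "adj G v (l i)" using lR(2)[OF i] in_closed_nbhd[OF wf] by blast
        qed
        show "\<forall>i\<in>{1..n}. \<forall>j\<in>{1..n}. \<not> adj G (l i) (l j)"
        proof (intro ballI)
          fix i j assume "i \<in> {1..n}" "j \<in> {1..n}"
          then show "\<not> adj G (l i) (l j)" using nadj lR(1) by blast
        qed
      qed
      then show ?thesis by blast
    qed
  qed
qed

definition TBc :: "'a graph set \<Rightarrow> bool" where
  "TBc \<G> \<longleftrightarrow> (\<exists>D. \<forall>G\<in>\<G>. \<forall>v\<in>verts G. card (twin_class G ` closed_nbhd G v) \<le> D)"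

lemma hered_induced: "hereditary \<G> \<Longrightarrow> G \<in> \<G> \<Longrightarrow> S \<subseteq> verts G \<Longrightarrow> induced_subgraph G S \<in> \<G>"
  unfolding hereditary_def by blast

lemma P3_imp_P6:
  assumes graphs: "\<forall>G\<in>\<G>. wf_graph G" and her: "hereditary \<G>"
    and w0: "\<forall>G\<in>\<G>. omega_tilde G \<le> w0" and a0: "\<forall>G\<in>\<G>. alpha_star G \<le> a0"
  shows "\<exists>n. \<forall>G\<in>\<G>. \<not> contains_induced G (star_graph n) \<and>
                 \<not> contains_induced G (matching_KI n) \<and> \<not> contains_induced G (matching_KK n) \<and>
                 \<not> contains_induced G (antimatching_KK n) \<and> \<not> contains_induced G (halfgraph_KK n)"
proof (intro exI ballI)
  let ?n = "w0 + a0 + 1"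
  fix G assume G: "G \<in> \<G>"
  have wf: "wf_graph G" using graphs G by blast
  have om: "\<not> (\<exists>S\<subseteq>verts G. ?n \<le> omega_tilde (induced_subgraph G S))"
  proof
    assume "\<exists>S\<subseteq>verts G. ?n \<le> omega_tilde (induced_subgraph G S)"
    then obtain S where S: "S \<subseteq> verts G" "?n \<le> omega_tilde (induced_subgraph G S)" by blast
    have "induced_subgraph G S \<in> \<G>" by (rule hered_induced[OF her G S(1)])
    then have "omega_tilde (induced_subgraph G S) \<le> w0" using w0 by blast
    then show False using S(2) by simp
  qed
  have al: "\<not> (\<exists>S\<subseteq>verts G. ?n \<le> alpha_star (induced_subgraph G S))"
  proof
    assume "\<exists>S\<subseteq>verts G. ?n \<le> alpha_star (induced_subgraph G S)"
    then obtain S where S: "S \<subseteq> verts G" "?n \<le> alpha_star (induced_subgraph G S)" by blast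
    have "induced_subgraph G S \<in> \<G>" by (rule hered_induced[OF her G S(1)])
    then have "alpha_star (induced_subgraph G S) \<le> a0" using a0 by blast
    then show False using S(2) by simp
  qed
  have s: "\<not> contains_induced G (star_graph ?n)"
  proof
    assume "contains_induced G (star_graph ?n)"
    then have "\<exists>S\<subseteq>verts G. ?n \<le> alpha_star (induced_subgraph G S)" by (rule star_pattern_alpha[OF wf])
    then show False using al by blast
  qed
  have m1: "\<not> contains_induced G (matching_KI ?n)"
  proof
    assume c: "contains_induced G (matching_KI ?n)"
    have "\<exists>S\<subseteq>verts G. ?n \<le> omega_tilde (induced_subgraph G S)"
    proof (rule XY_pattern_omega[OF wf verts_MKI c])
      show "\<forall>i\<in>{1..?n}. \<forall>j\<in>{1..?n}. adj (matching_KI ?n) (Xv i) (Xv j) \<longleftrightarrow> i \<noteq> j"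
        using adj_MKI(1) by blast
      show "\<forall>i\<in>{1..?n}. \<forall>j\<in>{1..?n}. i \<noteq> j \<longrightarrow> (\<exists>k\<in>{1..?n}. adj (matching_KI ?n) (Xv i) (Yv k) \<noteq> adj (matching_KI ?n) (Xv j) (Yv k))"
      proof (intro ballI impI)
        fix i j assume ij: "i \<in> {1..?n}" "j \<in> {1..?n}" "i \<noteq> j"
        show "\<exists>k\<in>{1..?n}. adj (matching_KI ?n) (Xv i) (Yv k) \<noteq> adj (matching_KI ?n) (Xv j) (Yv k)"
          using ij adj_MKI(2)[of i ?n i] adj_MKI(2)[of j ?n i] by auto
      qed
    qed
    then show False using om by blast
  qed
  have m2: "\<not> contains_induced G (matching_KK ?n)"
  proof
    assume c: "contains_induced G (matching_KK ?n)"
    have "\<exists>S\<subseteq>verts G. ?n \<le> omega_tilde (induced_subgraph G S)"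
    proof (rule XY_pattern_omega[OF wf verts_MKK c])
      show "\<forall>i\<in>{1..?n}. \<forall>j\<in>{1..?n}. adj (matching_KK ?n) (Xv i) (Xv j) \<longleftrightarrow> i \<noteq> j"
        using adj_MKK(1) by blast
      show "\<forall>i\<in>{1..?n}. \<forall>j\<in>{1..?n}. i \<noteq> j \<longrightarrow> (\<exists>k\<in>{1..?n}. adj (matching_KK ?n) (Xv i) (Yv k) \<noteq> adj (matching_KK ?n) (Xv j) (Yv k))"
      proof (intro ballI impI)
        fix i j assume ij: "i \<in> {1..?n}" "j \<in> {1..?n}" "i \<noteq> j"
        show "\<exists>k\<in>{1..?n}. adj (matching_KK ?n) (Xv i) (Yv k) \<noteq> adj (matching_KK ?n) (Xv j) (Yv k)"
          using ij adj_MKK(2)[of i ?n i] adj_MKK(2)[of j ?n i] by auto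
      qed
    qed
    then show False using om by blast
  qed
  have m3: "\<not> contains_induced G (antimatching_KK ?n)"
  proof
    assume c: "contains_induced G (antimatching_KK ?n)"
    have "\<exists>S\<subseteq>verts G. ?n \<le> omega_tilde (induced_subgraph G S)"
    proof (rule XY_pattern_omega[OF wf verts_AKK c])
      show "\<forall>i\<in>{1..?n}. \<forall>j\<in>{1..?n}. adj (antimatching_KK ?n) (Xv i) (Xv j) \<longleftrightarrow> i \<noteq> j"
        using adj_AKK(1) by blast
      show "\<forall>i\<in>{1..?n}. \<forall>j\<in>{1..?n}. i \<noteq> j \<longrightarrow> (\<exists>k\<in>{1..?n}. adj (antimatching_KK ?n) (Xv i) (Yv k) \<noteq> adj (antimatching_KK ?n) (Xv j) (Yv k))"
      proof (intro ballI impI)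
        fix i j assume ij: "i \<in> {1..?n}" "j \<in> {1..?n}" "i \<noteq> j"
        show "\<exists>k\<in>{1..?n}. adj (antimatching_KK ?n) (Xv i) (Yv k) \<noteq> adj (antimatching_KK ?n) (Xv j) (Yv k)"
          using ij adj_AKK(2)[of i ?n i] adj_AKK(2)[of j ?n i] by auto
      qed
    qed
    then show False using om by blast
  qed
  have m4: "\<not> contains_induced G (halfgraph_KK ?n)"
  proof
    assume c: "contains_induced G (halfgraph_KK ?n)"
    have "\<exists>S\<subseteq>verts G. ?n \<le> omega_tilde (induced_subgraph G S)"
    proof (rule XY_pattern_omega[OF wf verts_HKK c])
      show "\<forall>i\<in>{1..?n}. \<forall>j\<in>{1..?n}. adj (halfgraph_KK ?n) (Xv i) (Xv j) \<longleftrightarrow> i \<noteq> j"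
        using adj_HKK(1) by blast
      show "\<forall>i\<in>{1..?n}. \<forall>j\<in>{1..?n}. i \<noteq> j \<longrightarrow> (\<exists>k\<in>{1..?n}. adj (halfgraph_KK ?n) (Xv i) (Yv k) \<noteq> adj (halfgraph_KK ?n) (Xv j) (Yv k))"
      proof (intro ballI impI)
        fix i j assume ij: "i \<in> {1..?n}" "j \<in> {1..?n}" "i \<noteq> j"
        have k: "min i j \<in> {1..?n}" using ij by (simp add: min_def)
        have "adj (halfgraph_KK ?n) (Xv i) (Yv (min i j)) \<noteq> adj (halfgraph_KK ?n) (Xv j) (Yv (min i j))"
          using ij k adj_HKK(2)[of i ?n "min i j"] adj_HKK(2)[of j ?n "min i j"] by (auto simp: min_def)
        then show "\<exists>k\<in>{1..?n}. adj (halfgraph_KK ?n) (Xv i) (Yv k) \<noteq> adj (halfgraph_KK ?n) (Xv j) (Yv k)"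
          using k by blast
      qed
    qed
    then show False using om by blast
  qed
  show "\<not> contains_induced G (star_graph ?n) \<and>
                 \<not> contains_induced G (matching_KI ?n) \<and> \<not> contains_induced G (matching_KK ?n) \<and>
                 \<not> contains_induced G (antimatching_KK ?n) \<and> \<not> contains_induced G (halfgraph_KK ?n)"
    using s m1 m2 m3 m4 by blast
qed

lemma P6_imp_TB:
  fixes \<G> :: "'a graph set"
  assumes graphs: "\<forall>G\<in>\<G>. wf_graph G"
    and P6: "\<exists>n. \<forall>G\<in>\<G>. \<not> contains_induced G (star_graph n) \<and>
                 \<not> contains_induced G (matching_KI n) \<and> \<not> contains_induced G (matching_KK n) \<and>
                 \<not> contains_induced G (antimatching_KK n) \<and> \<not> contains_induced G (halfgraph_KK n)"
  shows "TBc \<G>"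
proof -
  obtain n where n: "\<forall>G\<in>\<G>. \<not> contains_induced G (star_graph n) \<and>
                 \<not> contains_induced G (matching_KI n) \<and> \<not> contains_induced G (matching_KK n) \<and>
                 \<not> contains_induced G (antimatching_KK n) \<and> \<not> contains_induced G (halfgraph_KK n)"
    using P6 by (rule exE)
  obtain N where N: "\<forall>(G::'a graph) v. wf_graph G \<longrightarrow> v \<in> verts G \<longrightarrow>
           N \<le> card (twin_class G ` closed_nbhd G v) \<longrightarrow> has_pattern G n"
    using core[of n] by (rule exE)
  show ?thesis unfolding TBc_def
  proof (intro exI ballI)
    fix G v assume G: "G \<in> \<G>" and v: "v \<in> verts G"
    have wf: "wf_graph G" using graphs G by blast
    show "card (twin_class G ` closed_nbhd G v) \<le> N"
    proof (rule ccontr)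
      assume "\<not> card (twin_class G ` closed_nbhd G v) \<le> N"
      then have "N \<le> card (twin_class G ` closed_nbhd G v)" by simp
      then have hp: "has_pattern G n" using N[rule_format, OF wf v] by blast
      have "\<not> contains_induced G (star_graph n) \<and>
                 \<not> contains_induced G (matching_KI n) \<and> \<not> contains_induced G (matching_KK n) \<and>
                 \<not> contains_induced G (antimatching_KK n) \<and> \<not> contains_induced G (halfgraph_KK n)"
        using bspec[OF n G] .
      then show False using hp by blast
    qed
  qed
qed

theorem theorem1p5:
  fixes \<G> :: "'a graph set"
  assumes graphs: "\<forall>G\<in>\<G>. wf_graph G"
    and her: "hereditary \<G>"
  defines "P1 \<equiv> (\<exists>k. \<forall>G\<in>\<G>. omega_tilde G \<le> k \<and> cideg G \<le> k)"
    and "P2 \<equiv> (\<exists>d. \<forall>G\<in>\<G>. max_degree (twin_reduction G) \<le> d)"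
    and "P3 \<equiv> bounded_on \<G> omega_tilde \<and> bounded_on \<G> alpha_star"
    and "P4 \<equiv> bounded_on \<G> omega_tilde \<and> bounded_on \<G> theta_star"
    and "P5 \<equiv> bounded_on \<G> cdeg"
    and "P6 \<equiv> (\<exists>n. \<forall>G\<in>\<G>. \<not> contains_induced G (star_graph n) \<and>
                 \<not> contains_induced G (matching_KI n) \<and> \<not> contains_induced G (matching_KK n) \<and>
                 \<not> contains_induced G (antimatching_KK n) \<and> \<not> contains_induced G (halfgraph_KK n))"
  shows "(P1 \<longleftrightarrow> P2) \<and> (P1 \<longleftrightarrow> P3) \<and> (P1 \<longleftrightarrow> P4) \<and> (P1 \<longleftrightarrow> P5) \<and> (P1 \<longleftrightarrow> P6)"
proof -
  have wfG: "wf_graph G" if "G \<in> \<G>" for G using graphs that by blast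
  have TB_P1: "P1" if hyp: "TBc \<G>"
  proof -
    obtain D where D: "\<forall>G\<in>\<G>. \<forall>v\<in>verts G. card (twin_class G ` closed_nbhd G v) \<le> D"
      using hyp unfolding TBc_def by blast
    have "\<forall>G\<in>\<G>. omega_tilde G \<le> D + 2^D \<and> cideg G \<le> D + 2^D"
    proof
      fix G assume G: "G \<in> \<G>"
      show "omega_tilde G \<le> D + 2^D \<and> cideg G \<le> D + 2^D"
        by (rule TB_imp_P1[OF wfG[OF G]]) (use D G in blast)
    qed
    then show ?thesis unfolding P1_def by blast
  qed
  have P1_TB: "TBc \<G>" if hyp: "P1"
  proof -
    obtain k where k: "\<forall>G\<in>\<G>. omega_tilde G \<le> k \<and> cideg G \<le> k" using hyp unfolding P1_def by blast
    have "\<forall>G\<in>\<G>. \<forall>v\<in>verts G. card (twin_class G ` closed_nbhd G v) \<le> k * k"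
    proof (intro ballI)
      fix G v assume G: "G \<in> \<G>" and v: "v \<in> verts G"
      have kk: "omega_tilde G \<le> k" "cideg G \<le> k" using k G by auto
      show "card (twin_class G ` closed_nbhd G v) \<le> k * k" by (rule P1_imp_TB[OF wfG[OF G] kk v])
    qed
    then show ?thesis unfolding TBc_def by blast
  qed
  have TB_P2: "P2" if hyp: "TBc \<G>"
  proof -
    obtain D where D: "\<forall>G\<in>\<G>. \<forall>v\<in>verts G. card (twin_class G ` closed_nbhd G v) \<le> D"
      using hyp unfolding TBc_def by blast
    have "\<forall>G\<in>\<G>. max_degree (twin_reduction G) \<le> D"
    proof
      fix G assume G: "G \<in> \<G>"
      show "max_degree (twin_reduction G) \<le> D" by (rule TB_imp_P2[OF wfG[OF G]]) (use D G in blast)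
    qed
    then show ?thesis unfolding P2_def by blast
  qed
  have P2_TB: "TBc \<G>" if hyp: "P2"
  proof -
    obtain d where d: "\<forall>G\<in>\<G>. max_degree (twin_reduction G) \<le> d" using hyp unfolding P2_def by blast
    have "\<forall>G\<in>\<G>. \<forall>v\<in>verts G. card (twin_class G ` closed_nbhd G v) \<le> d + 1"
    proof (intro ballI)
      fix G v assume G: "G \<in> \<G>" and v: "v \<in> verts G"
      have dd: "max_degree (twin_reduction G) \<le> d" using d G by blast
      show "card (twin_class G ` closed_nbhd G v) \<le> d + 1" by (rule P2_imp_TB[OF wfG[OF G] dd v])
    qed
    then show ?thesis unfolding TBc_def by blast
  qed
  have P1_P5: "P5" if hyp: "P1"
  proof -
    obtain k where k: "\<forall>G\<in>\<G>. omega_tilde G \<le> k \<and> cideg G \<le> k" using hyp unfolding P1_def by blast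
    have "\<forall>G\<in>\<G>. cdeg G \<le> k * k"
    proof
      fix G assume G: "G \<in> \<G>"
      have kk: "omega_tilde G \<le> k" "cideg G \<le> k" using k G by auto
      show "cdeg G \<le> k * k" by (rule P1_imp_P5[OF wfG[OF G] kk])
    qed
    then show ?thesis unfolding P5_def bounded_on_def by blast
  qed
  have P5_P1: "P1" if hyp: "P5"
  proof -
    obtain k where k: "\<forall>G\<in>\<G>. cdeg G \<le> k" using hyp unfolding P5_def bounded_on_def by blast
    have "\<forall>G\<in>\<G>. omega_tilde G \<le> 2^(k+1) + (k+1) \<and> cideg G \<le> 2^(k+1) + (k+1)"
    proof
      fix G assume G: "G \<in> \<G>"
      have kk: "cdeg G \<le> k" using k G by blast
      show "omega_tilde G \<le> 2^(k+1) + (k+1) \<and> cideg G \<le> 2^(k+1) + (k+1)"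
        by (rule P5_imp_P1[OF wfG[OF G] kk])
    qed
    then show ?thesis unfolding P1_def by blast
  qed
  have P1_P4: "P4" if hyp: "P1"
  proof -
    obtain k where k: "\<forall>G\<in>\<G>. omega_tilde G \<le> k \<and> cideg G \<le> k" using hyp unfolding P1_def by blast
    have a: "\<forall>G\<in>\<G>. omega_tilde G \<le> k" using k by blast
    have b: "\<forall>G\<in>\<G>. theta_star G \<le> k"
    proof
      fix G assume G: "G \<in> \<G>"
      have kk: "cideg G \<le> k" using k G by blast
      show "theta_star G \<le> k" by (rule P1_imp_theta[OF wfG[OF G] kk])
    qed
    show ?thesis unfolding P4_def bounded_on_def using a b by blast
  qed
  have P4_P3: "P3" if hyp: "P4"
  proof -
    obtain k1 where k1: "\<forall>G\<in>\<G>. omega_tilde G \<le> k1" using hyp unfolding P4_def bounded_on_def by blast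
    obtain k2 where k2: "\<forall>G\<in>\<G>. theta_star G \<le> k2" using hyp unfolding P4_def bounded_on_def by blast
    have "\<forall>G\<in>\<G>. alpha_star G \<le> k2"
    proof
      fix G assume G: "G \<in> \<G>"
      have "alpha_star G \<le> theta_star G" by (rule P4_imp_alpha[OF wfG[OF G]])
      then show "alpha_star G \<le> k2" using k2 G by fastforce
    qed
    then show ?thesis unfolding P3_def bounded_on_def using k1 by blast
  qed
  have P3_P6: "P6" if hyp: "P3"
  proof -
    obtain w0 where w0: "\<forall>G\<in>\<G>. omega_tilde G \<le> w0" using hyp unfolding P3_def bounded_on_def by blast
    obtain a0 where a0: "\<forall>G\<in>\<G>. alpha_star G \<le> a0" using hyp unfolding P3_def bounded_on_def by blast
    show ?thesis unfolding P6_def by (rule P3_imp_P6[OF graphs her w0 a0])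
  qed
  have P6_TB: "TBc \<G>" if hyp: "P6"
    using hyp unfolding P6_def by (rule P6_imp_TB[OF graphs])
  show ?thesis
    using TB_P1 P1_TB TB_P2 P2_TB P1_P5 P5_P1 P1_P4 P4_P3 P3_P6 P6_TB by blast
qed


end
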